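(* Let $\theta_1,\theta_2,\dots\ge0$ with $h_n>0$ for all $n$, and suppose $h_{n-1}/h_n\to1$ as $n\to\infty$. Then, under $\mathbb{P}_n$, the random variables $(R_1,R_2,R_3,\dots)$ converge weakly as $n\to\infty$ (in the sense of finite-dimensional distributions) to independent Poisson random variables with respective means $\theta_1,\frac{\theta_2}{2},\frac{\theta_3}{3},\dots$.
   Context: For $\sigma\in\mathcal{S}_n$ (permutations of $\{1,\dots,n\}$), $R_j(\sigma)$ is the number of cycles of length $j$ in $\sigma$. Given nonnegative parameters $\theta_1,\theta_2,\dots$, set $h_0=1$, $h_n=\frac1{n!}\sum_{\sigma\in\mathcal{S}_n}\prod_{j\ge1}\theta_j^{R_j(\sigma)}$, and $\mathbb{P}_n(\sigma)=\frac{1}{n!h_n}\prod_{j\ge1}\theta_j^{R_j(\sigma)}$. *)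

theory Defs
  imports "HOL-Probability.Probability" "HOL-Combinatorics.Combinatorics"
begin

definition cyc_count :: "nat \<Rightarrow> nat \<Rightarrow> (nat \<Rightarrow> nat) \<Rightarrow> nat" where
  "cyc_count n j \<sigma> = card {c \<in> (\<lambda>x. orbit \<sigma> x) ` {1..n}. card c = j}"

text \<open>Weight prod_{j>=1} theta_j^{R_j(sigma)}; R_j = 0 for j > n.\<close>
definition perm_weight :: "(nat \<Rightarrow> real) \<Rightarrow> nat \<Rightarrow> (nat \<Rightarrow> nat) \<Rightarrow> real" where
  "perm_weight \<theta> n \<sigma> = (\<Prod>j\<in>{1..n}. \<theta> j ^ cyc_count n j \<sigma>)"

definition hh :: "(nat \<Rightarrow> real) \<Rightarrow> nat \<Rightarrow> real" where
  "hh \<theta> n = (if n = 0 then 1 else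
      (1 / fact n) * (\<Sum>\<sigma>\<in>{\<sigma>. \<sigma> permutes {1..n}}. perm_weight \<theta> n \<sigma>))"

definition Pn :: "(nat \<Rightarrow> real) \<Rightarrow> nat \<Rightarrow> (nat \<Rightarrow> nat) \<Rightarrow> real" where
  "Pn \<theta> n \<sigma> = perm_weight \<theta> n \<sigma> / (fact n * hh \<theta> n)"

definition En :: "(nat \<Rightarrow> real) \<Rightarrow> nat \<Rightarrow> ((nat \<Rightarrow> nat) \<Rightarrow> real) \<Rightarrow> real" where
  "En \<theta> n F = (\<Sum>\<sigma>\<in>{\<sigma>. \<sigma> permutes {1..n}}. Pn \<theta> n \<sigma> * F \<sigma>)"

definition poisson :: "real \<Rightarrow> nat pmf" where
  "poisson r = (if 0 < r then poisson_pmf r else return_pmf 0)"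

definition cyc_vec :: "nat \<Rightarrow> nat \<Rightarrow> (nat \<Rightarrow> nat) \<Rightarrow> (nat \<Rightarrow> nat)" where
  "cyc_vec m n \<sigma> = (\<lambda>j. if j \<in> {1..m} then cyc_count n j \<sigma> else 0)"

definition poisson_limit :: "(nat \<Rightarrow> real) \<Rightarrow> nat \<Rightarrow> (nat \<Rightarrow> nat) pmf" where
  "poisson_limit \<theta> m = Pi_pmf {1..m} 0 (\<lambda>j. poisson (\<theta> j / real j))"

end

theory Submission
  imports Defs
begin

definition cc :: "'a set \<Rightarrow> nat \<Rightarrow> ('a \<Rightarrow> 'a) \<Rightarrow> nat" where
  "cc S j \<sigma> = card {c \<in> (\<lambda>x. orbit \<sigma> x) ` S. card c = j}"

definition RV :: "'a set \<Rightarrow> ('a \<Rightarrow> 'a) \<Rightarrow> nat \<Rightarrow> nat" where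
  "RV S \<sigma> = (\<lambda>j. cc S j \<sigma>)"

definition SS :: "'a set \<Rightarrow> ((nat \<Rightarrow> nat) \<Rightarrow> real) \<Rightarrow> real" where
  "SS S \<Phi> = (\<Sum>\<sigma>\<in>{\<sigma>. \<sigma> permutes S}. \<Phi> (RV S \<sigma>))"

lemma self_in_orbit_perm:
  assumes "\<sigma> permutes S" "finite S" shows "x \<in> orbit \<sigma> x"
  using assms by (meson permutation_permutes permutation_self_in_orbit)

lemma RV_conj:
  assumes bij: "bij_betw \<pi> S T" and p: "\<sigma> permutes S" and fin: "finite S"
  shows "RV T (\<lambda>x. if x \<in> T then \<pi> (\<sigma> (inv_into S \<pi> x)) else x) = RV S \<sigma>"
proof -
  define \<sigma>' where "\<sigma>' = (\<lambda>x. if x \<in> T then \<pi> (\<sigma> (inv_into S \<pi> x)) else x)"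
  have inj: "inj_on \<pi> S" and img: "\<pi> ` S = T" using bij by (auto simp: bij_betw_def)
  have orb: "orbit \<sigma>' (\<pi> a) = \<pi> ` orbit \<sigma> a" if "a \<in> S" for a
  proof -
    have self: "a \<in> orbit \<sigma> a" using p fin by (rule self_in_orbit_perm)
    have sub: "orbit \<sigma> a \<subseteq> S" using permutes_orbit_subset[OF p that] .
    have "\<pi> ` orbit \<sigma> a = orbit \<sigma>' (\<pi> a)"
    proof (rule orbit_inverse[OF self])
      fix x assume "x \<in> orbit \<sigma> a"
      hence x: "x \<in> S" using sub by auto
      hence "\<sigma> x \<in> S" using p by (simp add: permutes_in_image)
      thus "\<sigma>' (\<pi> x) = \<pi> (\<sigma> x)" using x inj img by (auto simp: \<sigma>'_def)
    qed
    thus ?thesis by simp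
  qed
  have O: "(\<lambda>x. orbit \<sigma>' x) ` T = (\<lambda>a. \<pi> ` orbit \<sigma> a) ` S"
    unfolding img[symmetric] image_image using orb by auto
  have "cc T j \<sigma>' = cc S j \<sigma>" for j
  proof -
    have cardeq: "card (\<pi> ` orbit \<sigma> a) = card (orbit \<sigma> a)" if "a \<in> S" for a
      using inj permutes_orbit_subset[OF p that] by (meson card_image inj_on_subset)
    have "{c \<in> (\<lambda>x. orbit \<sigma>' x) ` T. card c = j} = (\<lambda>c. \<pi> ` c) ` {c \<in> (\<lambda>x. orbit \<sigma> x) ` S. card c = j}"
      unfolding O using cardeq by auto
    moreover have "inj_on (\<lambda>c. \<pi> ` c) {c \<in> (\<lambda>x. orbit \<sigma> x) ` S. card c = j}"
    proof -
      have "inj_on (\<lambda>c. \<pi> ` c) (Pow S)" using inj by (rule inj_on_image_Pow)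
      moreover have "{c \<in> (\<lambda>x. orbit \<sigma> x) ` S. card c = j} \<subseteq> Pow S"
        using permutes_orbit_subset[OF p] by auto
      ultimately show ?thesis by (rule inj_on_subset)
    qed
    ultimately show ?thesis unfolding cc_def by (simp add: card_image)
  qed
  thus ?thesis unfolding RV_def \<sigma>'_def by auto
qed

lemma SS_bij:
  assumes "bij_betw \<pi> S T" "finite S" shows "SS S \<Phi> = SS T \<Phi>"
proof -
  let ?f = "\<lambda>\<sigma> x. if x \<in> T then \<pi> (\<sigma> (inv_into S \<pi> x)) else x"
  have b: "bij_betw ?f {\<sigma>. \<sigma> permutes S} {\<sigma>. \<sigma> permutes T}"
    by (rule bij_betw_permutations[OF assms(1)])
  have "SS T \<Phi> = (\<Sum>\<sigma>\<in>{\<sigma>. \<sigma> permutes S}. \<Phi> (RV T (?f \<sigma>)))"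
    unfolding SS_def using sum.reindex_bij_betw[OF b, of "\<lambda>\<tau>. \<Phi> (RV T \<tau>)"] by simp
  also have "\<dots> = SS S \<Phi>" unfolding SS_def
    using RV_conj[OF assms(1) _ assms(2)] by (intro sum.cong) auto
  finally show ?thesis by simp
qed

lemma SS_card:
  assumes "finite S" "finite T" "card S = card T" shows "SS S \<Phi> = SS T \<Phi>"
proof -
  obtain \<pi> where "bij_betw \<pi> S T" using finite_same_card_bij[OF assms] by blast
  thus ?thesis using SS_bij assms(1) by blast
qed

definition addj :: "(nat \<Rightarrow> nat) \<Rightarrow> nat \<Rightarrow> nat \<Rightarrow> (nat \<Rightarrow> nat)" where
  "addj r j a = r(j := r j + a)"

lemma orbit_sub: assumes "\<sigma> permutes S" "c \<in> (\<lambda>x. orbit \<sigma> x) ` S" shows "c \<subseteq> S"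
  using assms(2) permutes_orbit_subset[OF assms(1)] by auto

lemma decomp_orbits:
  assumes fin: "finite S" and C: "C \<subseteq> S" "C \<noteq> {}" and rho: "\<rho> permutes C" "cyclic_on \<rho> C"
    and tau: "\<tau> permutes (S - C)"
  shows "(\<lambda>x. orbit (\<tau> \<circ> \<rho>) x) ` S = insert C ((\<lambda>x. orbit \<tau> x) ` (S - C))"
    and "C \<notin> (\<lambda>x. orbit \<tau> x) ` (S - C)"
proof -
  have o1: "orbit (\<tau> \<circ> \<rho>) x = C" if "x \<in> C" for x
  proof -
    have r: "\<rho> y \<in> C" if "y \<in> C" for y using rho(1) that by (simp add: permutes_in_image)
    have t: "\<tau> (\<rho> y) = \<rho> y" if "y \<in> C" for y using r[OF that] permutes_not_in[OF tau] by auto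
    have "orbit (\<tau> \<circ> \<rho>) x = orbit \<rho> x"
      by (rule orbit_cong0[where A=C]) (use that r t in auto)
    also have "\<dots> = C" using rho(2) that by (rule orbit_cyclic_eq3)
    finally show ?thesis .
  qed
  have o2: "orbit (\<tau> \<circ> \<rho>) x = orbit \<tau> x" if "x \<in> S - C" for x
  proof -
    have r: "\<tau> y \<in> S - C" if "y \<in> S - C" for y using permutes_in_image[OF tau] that by blast
    have t: "\<rho> y = y" if "y \<in> S - C" for y using that permutes_not_in[OF rho(1)] by auto
    show ?thesis
      by (rule orbit_cong0[where A="S - C"]) (use that r t in auto)
  qed
  show "(\<lambda>x. orbit (\<tau> \<circ> \<rho>) x) ` S = insert C ((\<lambda>x. orbit \<tau> x) ` (S - C))"
  proof
    show "(\<lambda>x. orbit (\<tau> \<circ> \<rho>) x) ` S \<subseteq> insert C ((\<lambda>x. orbit \<tau> x) ` (S - C))"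
      using o1 o2 by (auto; metis Diff_iff imageI)
    show "insert C ((\<lambda>x. orbit \<tau> x) ` (S - C)) \<subseteq> (\<lambda>x. orbit (\<tau> \<circ> \<rho>) x) ` S"
    proof -
      obtain x where "x \<in> C" using C(2) by auto
      hence "C \<in> (\<lambda>x. orbit (\<tau> \<circ> \<rho>) x) ` S" using o1 C(1) by (metis image_eqI subsetD)
      moreover have "(\<lambda>x. orbit \<tau> x) ` (S - C) \<subseteq> (\<lambda>x. orbit (\<tau> \<circ> \<rho>) x) ` S"
        using o2 by (auto; metis Diff_iff imageI)
      ultimately show ?thesis by auto
    qed
  qed
  show "C \<notin> (\<lambda>x. orbit \<tau> x) ` (S - C)"
  proof
    assume "C \<in> (\<lambda>x. orbit \<tau> x) ` (S - C)"
    then obtain x where x: "x \<in> S - C" "C = orbit \<tau> x" by auto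
    have "x \<in> orbit \<tau> x" using fin by (intro self_in_orbit_perm[OF tau]) auto
    thus False using x by auto
  qed
qed

lemma RV_decomp:
  assumes fin: "finite S" and C: "C \<subseteq> S" "C \<noteq> {}" and rho: "\<rho> permutes C" "cyclic_on \<rho> C"
    and tau: "\<tau> permutes (S - C)"
  shows "RV S (\<tau> \<circ> \<rho>) = addj (RV (S - C) \<tau>) (card C) 1"
proof -
  note d = decomp_orbits[OF assms]
  have finO: "finite ((\<lambda>x. orbit \<tau> x) ` (S - C))" using fin by auto
  have "cc S i (\<tau> \<circ> \<rho>) = cc (S - C) i \<tau> + (if i = card C then 1 else 0)" for i
  proof (cases "i = card C")
    case True
    have "{c \<in> (\<lambda>x. orbit (\<tau> \<circ> \<rho>) x) ` S. card c = i} = insert C {c \<in> (\<lambda>x. orbit \<tau> x) ` (S - C). card c = i}"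
      unfolding d(1) using True by auto
    thus ?thesis unfolding cc_def using True d(2) finO by simp
  next
    case False
    have "{c \<in> (\<lambda>x. orbit (\<tau> \<circ> \<rho>) x) ` S. card c = i} = {c \<in> (\<lambda>x. orbit \<tau> x) ` (S - C). card c = i}"
      unfolding d(1) using False by auto
    thus ?thesis unfolding cc_def using False by simp
  qed
  thus ?thesis unfolding RV_def addj_def by auto
qed

lemma cyclic_restrict_permutes:
  assumes p: "\<sigma> permutes S" and cyc: "cyclic_on \<sigma> C"
  shows "perm_restrict \<sigma> C permutes C"
proof (rule bij_imp_permutes)
  have "\<sigma> ` C = C"
  proof
    show "\<sigma> ` C \<subseteq> C" using cyc by (auto intro: cyclic_on_inI)
    show "C \<subseteq> \<sigma> ` C"
    proof
      fix y assume y: "y \<in> C"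
      have "\<sigma> (inv \<sigma> y) = y" using p by (simp add: permutes_inverses(1))
      moreover hence "inv \<sigma> y \<in> C" using cyclic_on_f_in[OF p cyc] y by simp
      ultimately show "y \<in> \<sigma> ` C" by (metis imageI)
    qed
  qed
  moreover have "inj_on \<sigma> C" using p by (meson permutes_inj_on)
  ultimately have "bij_betw \<sigma> C C" by (simp add: bij_betw_def)
  thus "bij_betw (perm_restrict \<sigma> C) C C"
    by (rule bij_betw_cong[THEN iffD1, rotated]) (simp add: perm_restrict_def)
  show "\<And>x. x \<notin> C \<Longrightarrow> perm_restrict \<sigma> C x = x" by (simp add: perm_restrict_def)
qed

lemma decomp_sum_C:
  assumes fin: "finite S" and C: "C \<subseteq> S" "C \<noteq> {}"
  shows "(\<Sum>\<sigma>\<in>{\<sigma>. \<sigma> permutes S \<and> C \<in> (\<lambda>x. orbit \<sigma> x) ` S}. \<Phi> (RV S \<sigma>)) =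
     real (card {\<rho>. \<rho> permutes C \<and> cyclic_on \<rho> C}) * SS (S - C) (\<lambda>r. \<Phi> (addj r (card C) 1))"
proof -
  let ?Y = "{\<rho>. \<rho> permutes C \<and> cyclic_on \<rho> C} \<times> {\<tau>. \<tau> permutes (S - C)}"
  let ?g = "\<lambda>(\<rho>, \<tau>). \<tau> \<circ> \<rho>"
  have finC: "finite C" using C fin finite_subset by blast
  have inj: "inj_on ?g ?Y"
  proof (rule inj_onI, clarsimp)
    fix \<rho> \<tau> \<rho>' \<tau>'
    assume a: "\<rho> permutes C" "cyclic_on \<rho> C" "\<tau> permutes S - C" "\<rho>' permutes C" "cyclic_on \<rho>' C"
      "\<tau>' permutes S - C" and eq: "\<tau> \<circ> \<rho> = \<tau>' \<circ> \<rho>'"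
    have "\<rho> x = \<rho>' x" for x
    proof (cases "x \<in> C")
      case True
      hence "\<rho> x \<in> C" "\<rho>' x \<in> C" using a by (auto simp: permutes_in_image)
      hence "\<tau> (\<rho> x) = \<rho> x" "\<tau>' (\<rho>' x) = \<rho>' x" using a permutes_not_in by fastforce+
      thus ?thesis using eq by (metis comp_apply)
    next
      case False thus ?thesis using a permutes_not_in by metis
    qed
    hence r: "\<rho> = \<rho>'" by auto
    have "\<tau> x = \<tau>' x" for x
    proof (cases "x \<in> C")
      case True thus ?thesis using a permutes_not_in by (metis Diff_iff)
    next
      case False
      hence "\<rho> x = x" using a permutes_not_in by metis
      thus ?thesis using eq r by (metis comp_apply)
    qed
    thus "\<rho> = \<rho>' \<and> \<tau> = \<tau>'" using r by auto
  qed
  have img: "?g ` ?Y = {\<sigma>. \<sigma> permutes S \<and> C \<in> (\<lambda>x. orbit \<sigma> x) ` S}"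
  proof
    show "?g ` ?Y \<subseteq> {\<sigma>. \<sigma> permutes S \<and> C \<in> (\<lambda>x. orbit \<sigma> x) ` S}"
    proof clarsimp
      fix \<rho> \<tau> assume a: "\<rho> permutes C" "cyclic_on \<rho> C" "\<tau> permutes S - C"
      have "\<tau> \<circ> \<rho> permutes S"
        using a C by (meson Diff_subset permutes_compose permutes_subset)
      moreover have "C \<in> (\<lambda>x. orbit (\<tau> \<circ> \<rho>) x) ` S"
        using decomp_orbits(1)[OF fin C a] by auto
      ultimately show "\<tau> \<circ> \<rho> permutes S \<and> C \<in> (\<lambda>x. orbit (\<tau> \<circ> \<rho>) x) ` S" by simp
    qed
    show "{\<sigma>. \<sigma> permutes S \<and> C \<in> (\<lambda>x. orbit \<sigma> x) ` S} \<subseteq> ?g ` ?Y"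
    proof
      fix \<sigma> assume "\<sigma> \<in> {\<sigma>. \<sigma> permutes S \<and> C \<in> (\<lambda>x. orbit \<sigma> x) ` S}"
      then obtain x where p: "\<sigma> permutes S" and x: "x \<in> S" and Cx: "C = orbit \<sigma> x" by auto
      have cyc: "cyclic_on \<sigma> C" using Cx cyclic_on_orbit[OF p fin] by simp
      let ?\<rho> = "perm_restrict \<sigma> C" and ?\<tau> = "perm_restrict \<sigma> (S - C)"
      have "?\<rho> permutes C" using p cyc by (rule cyclic_restrict_permutes)
      moreover have "cyclic_on ?\<rho> C" using cyc by (simp add: cyclic_on_perm_restrict)
      moreover have "?\<tau> permutes (S - C)" using p cyc by (rule perm_restrict_diff_cyclic)
      moreover have "\<sigma> = ?\<tau> \<circ> ?\<rho>"
      proof -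
        have "?\<tau> \<circ> ?\<rho> = perm_restrict \<sigma> ((S - C) \<union> C)"
          by (rule perm_restrict_comp) (use cyc in auto)
        also have "(S - C) \<union> C = S" using C by auto
        finally have "?\<tau> \<circ> ?\<rho> = \<sigma>" using p by (simp add: o_def)
        thus ?thesis by simp
      qed
      ultimately show "\<sigma> \<in> ?g ` ?Y" by (auto intro!: image_eqI[where x="(?\<rho>, ?\<tau>)"])
    qed
  qed
  have "(\<Sum>\<sigma>\<in>{\<sigma>. \<sigma> permutes S \<and> C \<in> (\<lambda>x. orbit \<sigma> x) ` S}. \<Phi> (RV S \<sigma>)) =
        (\<Sum>y\<in>?Y. \<Phi> (RV S (?g y)))"
    unfolding img[symmetric] using sum.reindex[OF inj, of "\<lambda>\<sigma>. \<Phi> (RV S \<sigma>)"] by (simp add: comp_def)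
  also have "\<dots> = (\<Sum>(\<rho>,\<tau>)\<in>?Y. \<Phi> (addj (RV (S - C) \<tau>) (card C) 1))"
    by (rule sum.cong) (auto simp: RV_decomp[OF fin C])
  also have "\<dots> = (\<Sum>\<rho>\<in>{\<rho>. \<rho> permutes C \<and> cyclic_on \<rho> C}. \<Sum>\<tau>\<in>{\<tau>. \<tau> permutes (S - C)}.
                    \<Phi> (addj (RV (S - C) \<tau>) (card C) 1))"
    by (rule sum.cartesian_product[symmetric])
  also have "\<dots> = real (card {\<rho>. \<rho> permutes C \<and> cyclic_on \<rho> C}) * SS (S - C) (\<lambda>r. \<Phi> (addj r (card C) 1))"
    by (simp add: SS_def)
  finally show ?thesis .
qed

lemma finite_subs: "finite S \<Longrightarrow> finite {C. C \<subseteq> S \<and> card C = j}"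
  by (rule finite_subset[of _ "Pow S"]) auto

lemma cc_sum_eq:
  assumes fin: "finite S" and p: "\<sigma> permutes S"
  shows "real (cc S j \<sigma>) = (\<Sum>C\<in>{C. C \<subseteq> S \<and> card C = j}. if C \<in> (\<lambda>x. orbit \<sigma> x) ` S then 1 else 0)"
proof -
  have "{c \<in> (\<lambda>x. orbit \<sigma> x) ` S. card c = j} = {C \<in> {C. C \<subseteq> S \<and> card C = j}. C \<in> (\<lambda>x. orbit \<sigma> x) ` S}"
    using orbit_sub[OF p] by auto
  thus ?thesis unfolding cc_def using sum.inter_filter[OF finite_subs[OF fin, of j], of "\<lambda>_. 1::real"]
    by simp
qed

lemma decomp_sum:
  assumes fin: "finite S" and j: "j \<ge> 1"
  shows "(\<Sum>\<sigma>\<in>{\<sigma>. \<sigma> permutes S}. real (cc S j \<sigma>) * \<Phi> (RV S \<sigma>)) =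
     (\<Sum>C\<in>{C. C \<subseteq> S \<and> card C = j}. real (card {\<rho>. \<rho> permutes C \<and> cyclic_on \<rho> C}) * SS (S - C) (\<lambda>r. \<Phi> (addj r j 1)))"
proof -
  let ?Sub = "{C. C \<subseteq> S \<and> card C = j}"
  have "(\<Sum>\<sigma>\<in>{\<sigma>. \<sigma> permutes S}. real (cc S j \<sigma>) * \<Phi> (RV S \<sigma>)) =
        (\<Sum>\<sigma>\<in>{\<sigma>. \<sigma> permutes S}. \<Sum>C\<in>?Sub. if C \<in> (\<lambda>x. orbit \<sigma> x) ` S then \<Phi> (RV S \<sigma>) else 0)"
    by (rule sum.cong) (auto simp: cc_sum_eq[OF fin] sum_distrib_right intro!: sum.cong)
  also have "\<dots> = (\<Sum>C\<in>?Sub. \<Sum>\<sigma>\<in>{\<sigma>. \<sigma> permutes S}. if C \<in> (\<lambda>x. orbit \<sigma> x) ` S then \<Phi> (RV S \<sigma>) else 0)"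
    by (rule sum.swap)
  also have "\<dots> = (\<Sum>C\<in>?Sub. \<Sum>\<sigma>\<in>{\<sigma>. \<sigma> permutes S \<and> C \<in> (\<lambda>x. orbit \<sigma> x) ` S}. \<Phi> (RV S \<sigma>))"
  proof (rule sum.cong[OF refl])
    fix C
    have "{\<sigma>. \<sigma> permutes S \<and> C \<in> (\<lambda>x. orbit \<sigma> x) ` S} = {\<sigma> \<in> {\<sigma>. \<sigma> permutes S}. C \<in> (\<lambda>x. orbit \<sigma> x) ` S}"
      by auto
    thus "(\<Sum>\<sigma>\<in>{\<sigma>. \<sigma> permutes S}. if C \<in> (\<lambda>x. orbit \<sigma> x) ` S then \<Phi> (RV S \<sigma>) else 0) =
          (\<Sum>\<sigma>\<in>{\<sigma>. \<sigma> permutes S \<and> C \<in> (\<lambda>x. orbit \<sigma> x) ` S}. \<Phi> (RV S \<sigma>))"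
      using sum.inter_filter[OF finite_permutations[OF fin], of "\<lambda>\<sigma>. \<Phi> (RV S \<sigma>)" "\<lambda>\<sigma>. C \<in> (\<lambda>x. orbit \<sigma> x) ` S"]
      by simp
  qed
  also have "\<dots> = (\<Sum>C\<in>?Sub. real (card {\<rho>. \<rho> permutes C \<and> cyclic_on \<rho> C}) * SS (S - C) (\<lambda>r. \<Phi> (addj r j 1)))"
  proof (rule sum.cong[OF refl])
    fix C assume "C \<in> ?Sub"
    hence C: "C \<subseteq> S" "card C = j" by auto
    hence "C \<noteq> {}" using j by auto
    thus "(\<Sum>\<sigma>\<in>{\<sigma>. \<sigma> permutes S \<and> C \<in> (\<lambda>x. orbit \<sigma> x) ` S}. \<Phi> (RV S \<sigma>)) =
      real (card {\<rho>. \<rho> permutes C \<and> cyclic_on \<rho> C}) * SS (S - C) (\<lambda>r. \<Phi> (addj r j 1))"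
      using decomp_sum_C[OF fin C(1)] C(2) by simp
  qed
  finally show ?thesis .
qed

lemma cc_full:
  assumes fin: "finite C" and ne: "C \<noteq> {}" and p: "\<rho> permutes C"
  shows "cc C (card C) \<rho> = (if cyclic_on \<rho> C then 1 else 0)"
proof (cases "cyclic_on \<rho> C")
  case True
  hence "(\<lambda>x. orbit \<rho> x) ` C = {C}" using ne orbit_cyclic_eq3[OF True] by auto
  moreover have "{c. c = C \<and> card c = card C} = {C}" by auto
  ultimately show ?thesis using True unfolding cc_def by simp
next
  case False
  have E: "{c \<in> (\<lambda>x. orbit \<rho> x) ` C. card c = card C} = {}"
  proof (rule ccontr)
    assume "{c \<in> (\<lambda>x. orbit \<rho> x) ` C. card c = card C} \<noteq> {}"
    then obtain x where x: "x \<in> C" "card (orbit \<rho> x) = card C" by auto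
    have "orbit \<rho> x \<subseteq> C" using permutes_orbit_subset[OF p x(1)] .
    hence "orbit \<rho> x = C" using x(2) fin by (simp add: card_subset_eq)
    hence "cyclic_on \<rho> C" using x(1) by (metis cyclic_on_singleI)
    thus False using False by simp
  qed
  show ?thesis using False unfolding cc_def E by simp
qed

lemma card_cyc_SS:
  assumes fin: "finite C" and ne: "C \<noteq> {}"
  shows "real (card {\<rho>. \<rho> permutes C \<and> cyclic_on \<rho> C}) = SS C (\<lambda>r. real (r (card C)))"
proof -
  have "SS C (\<lambda>r. real (r (card C))) = (\<Sum>\<rho>\<in>{\<rho>. \<rho> permutes C}. if cyclic_on \<rho> C then 1 else 0)"
    unfolding SS_def RV_def by (rule sum.cong) (auto simp: cc_full[OF fin ne])
  also have "\<dots> = real (card {\<rho> \<in> {\<rho>. \<rho> permutes C}. cyclic_on \<rho> C})"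
    using sum.inter_filter[OF finite_permutations[OF fin], of "\<lambda>_. 1::real"] by simp
  finally show ?thesis by simp
qed

definition cyn :: "nat \<Rightarrow> real" where "cyn j = SS {1..j} (\<lambda>r. real (r j))"

lemma decomp_sum2:
  assumes fin: "finite S" and j: "j \<ge> 1"
  shows "(\<Sum>\<sigma>\<in>{\<sigma>. \<sigma> permutes S}. real (cc S j \<sigma>) * \<Phi> (RV S \<sigma>)) =
     real (card S choose j) * cyn j * SS {1..card S - j} (\<lambda>r. \<Phi> (addj r j 1))"
proof -
  have "(\<Sum>\<sigma>\<in>{\<sigma>. \<sigma> permutes S}. real (cc S j \<sigma>) * \<Phi> (RV S \<sigma>)) =
     (\<Sum>C\<in>{C. C \<subseteq> S \<and> card C = j}. cyn j * SS {1..card S - j} (\<lambda>r. \<Phi> (addj r j 1)))"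
    unfolding decomp_sum[OF fin j]
  proof (rule sum.cong[OF refl])
    fix C assume "C \<in> {C. C \<subseteq> S \<and> card C = j}"
    hence C: "C \<subseteq> S" "card C = j" by auto
    have finC: "finite C" using C fin finite_subset by blast
    have ne: "C \<noteq> {}" using C j by auto
    have 1: "real (card {\<rho>. \<rho> permutes C \<and> cyclic_on \<rho> C}) = cyn j"
      unfolding card_cyc_SS[OF finC ne] cyn_def C(2) by (rule SS_card) (use finC C in auto)
    have 2: "SS (S - C) (\<lambda>r. \<Phi> (addj r j 1)) = SS {1..card S - j} (\<lambda>r. \<Phi> (addj r j 1))"
      by (rule SS_card) (use fin C finC in \<open>auto simp: card_Diff_subset\<close>)
    show "real (card {\<rho>. \<rho> permutes C \<and> cyclic_on \<rho> C}) * SS (S - C) (\<lambda>r. \<Phi> (addj r j 1)) =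
         cyn j * SS {1..card S - j} (\<lambda>r. \<Phi> (addj r j 1))" using 1 2 by simp
  qed
  also have "\<dots> = real (card S choose j) * cyn j * SS {1..card S - j} (\<lambda>r. \<Phi> (addj r j 1))"
    using n_subsets[OF fin, of j] by simp
  finally show ?thesis .
qed

lemma orbit_card_bounds:
  assumes fin: "finite S" and p: "\<sigma> permutes S" and c: "c \<in> (\<lambda>x. orbit \<sigma> x) ` S"
  shows "1 \<le> card c" "card c \<le> card S"
proof -
  have sub: "c \<subseteq> S" using orbit_sub[OF p c] .
  have "c \<noteq> {}"
  proof -
    obtain x where "c = orbit \<sigma> x" using c by auto
    thus ?thesis using orbit_nonempty by simp
  qed
  moreover have "finite c" using sub fin finite_subset by blast
  ultimately show "1 \<le> card c" by (simp add: Suc_le_eq card_gt_0_iff)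
  show "card c \<le> card S" using sub fin by (rule card_mono[rotated])
qed

lemma cc_zero: "finite S \<Longrightarrow> \<sigma> permutes S \<Longrightarrow> cc S 0 \<sigma> = 0"
  unfolding cc_def using orbit_card_bounds(1) by fastforce

lemma cc_big: "finite S \<Longrightarrow> \<sigma> permutes S \<Longrightarrow> card S < j \<Longrightarrow> cc S j \<sigma> = 0"
  unfolding cc_def using orbit_card_bounds(2) by fastforce

lemma cc_le: assumes "finite S" "\<sigma> permutes S" shows "cc S j \<sigma> \<le> card S"
proof -
  have "cc S j \<sigma> \<le> card ((\<lambda>x. orbit \<sigma> x) ` S)" unfolding cc_def
    using assms(1) by (intro card_mono) auto
  also have "\<dots> \<le> card S" by (rule card_image_le[OF assms(1)])
  finally show ?thesis .
qed

lemma sum_sizes: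
  assumes fin: "finite S" and p: "\<sigma> permutes S"
  shows "(\<Sum>j\<in>{1..card S}. j * cc S j \<sigma>) = card S"
proof -
  let ?O = "(\<lambda>x. orbit \<sigma> x) ` S"
  have cyc: "cyclic_on \<sigma> (orbit \<sigma> x)" for x using cyclic_on_orbit[OF p fin] .
  have disj: "pairwise disjnt ?O"
  proof (rule pairwiseI)
    fix c1 c2 assume "c1 \<in> ?O" "c2 \<in> ?O" "c1 \<noteq> c2"
    then obtain x y where xy: "c1 = orbit \<sigma> x" "c2 = orbit \<sigma> y" by auto
    show "disjnt c1 c2"
    proof (rule ccontr)
      assume "\<not> disjnt c1 c2"
      then obtain z where "z \<in> c1" "z \<in> c2" by (auto simp: disjnt_def)
      hence "orbit \<sigma> z = c1" "orbit \<sigma> z = c2" using xy orbit_cyclic_eq3[OF cyc] by metis+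
      thus False using \<open>c1 \<noteq> c2\<close> by simp
    qed
  qed
  have U: "\<Union>?O = S"
  proof
    show "\<Union>?O \<subseteq> S" using orbit_sub[OF p] by auto
    show "S \<subseteq> \<Union>?O" using self_in_orbit_perm[OF p fin] by auto
  qed
  have finO: "\<And>c. c \<in> ?O \<Longrightarrow> finite c" using orbit_sub[OF p] fin finite_subset by metis
  have "card S = sum card ?O" using card_Union_disjoint[OF disj finO] U by simp
  also have "\<dots> = (\<Sum>j\<in>{1..card S}. \<Sum>c\<in>{c \<in> ?O. card c = j}. card c)"
    by (rule sum.group[symmetric]) (use fin orbit_card_bounds[OF fin p] in auto)
  also have "\<dots> = (\<Sum>j\<in>{1..card S}. j * cc S j \<sigma>)"
    unfolding cc_def by (rule sum.cong) auto
  finally show ?thesis by simp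
qed

lemma SS_const: "finite S \<Longrightarrow> SS S (\<lambda>_. c) = fact (card S) * c"
  unfolding SS_def by (simp add: card_permutations)

lemma cyn_sum: "(\<Sum>j\<in>{1..n}. cyn j / fact (j - 1)) = real n"
proof -
  let ?S = "{1..n::nat}" and ?P = "{\<sigma>. \<sigma> permutes {1..n::nat}}"
  have A: "(\<Sum>\<sigma>\<in>?P. \<Sum>j\<in>{1..n}. real j * real (cc ?S j \<sigma>)) = (\<Sum>\<sigma>\<in>?P. real n)"
  proof (rule sum.cong[OF refl])
    fix \<sigma> assume "\<sigma> \<in> ?P"
    hence "(\<Sum>j\<in>{1..card ?S}. j * cc ?S j \<sigma>) = card ?S" using sum_sizes[of ?S \<sigma>] by auto
    hence "real (\<Sum>j\<in>{1..n}. j * cc ?S j \<sigma>) = real n" by simp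
    thus "(\<Sum>j\<in>{1..n}. real j * real (cc ?S j \<sigma>)) = real n" by simp
  qed
  have B: "(\<Sum>\<sigma>\<in>?P. real n) = fact n * real n" by (simp add: card_permutations)
  have C: "(\<Sum>j\<in>{1..n}. real j * (\<Sum>\<sigma>\<in>?P. real (cc ?S j \<sigma>) * 1)) =
      (\<Sum>\<sigma>\<in>?P. \<Sum>j\<in>{1..n}. real j * real (cc ?S j \<sigma>))"
    unfolding sum_distrib_left mult_1_right by (rule sum.swap)
  have D: "(\<Sum>\<sigma>\<in>?P. real (cc ?S j \<sigma>) * 1) = real (n choose j) * cyn j * fact (n - j)"
    if "j \<in> {1..n}" for j
    using decomp_sum2[of ?S j "\<lambda>_. 1"] SS_const[of "{1..n-j}" 1] that by simp
  have E: "(\<Sum>j\<in>{1..n}. real j * (\<Sum>\<sigma>\<in>?P. real (cc ?S j \<sigma>) * 1)) =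
        (\<Sum>j\<in>{1..n}. real j * (real (n choose j) * cyn j * fact (n - j)))"
    by (rule sum.cong[OF refl]) (simp only: D)
  have F: "real j * (real (n choose j) * cyn j * fact (n - j)) = fact n * (cyn j / fact (j - 1))"
    if "j \<in> {1..n}" for j
  proof -
    have j: "1 \<le> j" "j \<le> n" using that by auto
    have "real (fact j * fact (n - j) * (n choose j)) = real (fact n)"
      using binomial_fact_lemma[OF j(2)] by simp
    hence "fact j * fact (n - j) * real (n choose j) = fact n"
      by (simp only: of_nat_mult of_nat_fact)
    moreover have "fact j = real j * fact (j - 1)"
      using j(1) by (simp add: fact_reduce)
    ultimately show ?thesis by (simp add: field_simps)
  qed
  have G: "(\<Sum>j\<in>{1..n}. real j * (real (n choose j) * cyn j * fact (n - j))) =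
           (\<Sum>j\<in>{1..n}. fact n * (cyn j / fact (j - 1)))"
    by (rule sum.cong[OF refl]) (rule F)
  have "(\<Sum>j\<in>{1..n}. fact n * (cyn j / fact (j - 1))) = fact n * real n"
    using A B C E G by linarith
  hence "fact n * (\<Sum>j\<in>{1..n}. cyn j / fact (j - 1)) = fact n * real n"
    by (simp only: sum_distrib_left)
  thus ?thesis by simp
qed

lemma cyn_eq: "j \<ge> 1 \<Longrightarrow> cyn j = fact (j - 1)"
proof -
  assume "j \<ge> 1"
  then obtain k where k: "j = Suc k" by (metis Suc_le_D One_nat_def)
  have "(\<Sum>j\<in>{1..Suc k}. cyn j / fact (j - 1)) = (\<Sum>j\<in>{1..k}. cyn j / fact (j - 1)) + cyn (Suc k) / fact k"
    by simp
  hence "real (Suc k) = real k + cyn (Suc k) / fact k" using cyn_sum[of "Suc k"] cyn_sum[of k] by linarith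
  hence "cyn (Suc k) / fact k = 1" by linarith
  hence "cyn (Suc k) = fact k" by (metis divide_eq_1_iff)
  thus ?thesis using k by simp
qed

definition wvN :: "(nat \<Rightarrow> real) \<Rightarrow> nat \<Rightarrow> (nat \<Rightarrow> nat) \<Rightarrow> real" where
  "wvN \<theta> N r = (\<Prod>j\<in>{1..N}. \<theta> j ^ r j)"

definition Z :: "(nat \<Rightarrow> real) \<Rightarrow> nat \<Rightarrow> ((nat \<Rightarrow> nat) \<Rightarrow> real) \<Rightarrow> real" where
  "Z \<theta> n \<Psi> = SS {1..n} (\<lambda>r. wvN \<theta> n r * \<Psi> r)"

lemma wvN_addj:
  assumes "1 \<le> j" "j \<le> N" shows "wvN \<theta> N (addj r j 1) = \<theta> j * wvN \<theta> N r"
proof -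
  have j: "j \<in> {1..N}" using assms by auto
  have "wvN \<theta> N (addj r j 1) = \<theta> j ^ (addj r j 1 j) * (\<Prod>i\<in>{1..N} - {j}. \<theta> i ^ addj r j 1 i)"
    unfolding wvN_def by (rule prod.remove[OF _ j]) simp
  also have "addj r j 1 j = r j + 1" by (simp add: addj_def)
  also have "(\<Prod>i\<in>{1..N} - {j}. \<theta> i ^ addj r j 1 i) = (\<Prod>i\<in>{1..N} - {j}. \<theta> i ^ r i)"
    by (rule prod.cong) (auto simp: addj_def)
  also have "\<theta> j ^ (r j + 1) * (\<Prod>i\<in>{1..N} - {j}. \<theta> i ^ r i) = \<theta> j * (\<theta> j ^ r j * (\<Prod>i\<in>{1..N} - {j}. \<theta> i ^ r i))"
    by simp
  also have "\<theta> j ^ r j * (\<Prod>i\<in>{1..N} - {j}. \<theta> i ^ r i) = wvN \<theta> N r"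
    unfolding wvN_def using prod.remove[OF _ j, of "\<lambda>i. \<theta> i ^ r i"] by simp
  finally show ?thesis .
qed

lemma wvN_mono:
  assumes "N \<le> M" "\<And>i. N < i \<Longrightarrow> r i = 0" shows "wvN \<theta> M r = wvN \<theta> N r"
  unfolding wvN_def by (rule prod.mono_neutral_left[symmetric]) (use assms in auto)

lemma RV_big: "\<sigma> permutes {1..n} \<Longrightarrow> n < i \<Longrightarrow> RV {1..n} \<sigma> i = 0"
  unfolding RV_def using cc_big[of "{1..n}" \<sigma> i] by simp

lemma markC:
  assumes j: "1 \<le> j" "j \<le> n"
  shows "Z \<theta> n (\<lambda>r. real (r j) * \<Psi> r) =
         \<theta> j * (fact n / (fact (n - j) * j)) * Z \<theta> (n - j) (\<lambda>r. \<Psi> (addj r j 1))"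
proof -
  let ?\<Phi> = "\<lambda>r. wvN \<theta> n r * \<Psi> r"
  have "Z \<theta> n (\<lambda>r. real (r j) * \<Psi> r) =
        (\<Sum>\<sigma>\<in>{\<sigma>. \<sigma> permutes {1..n}}. real (cc {1..n} j \<sigma>) * ?\<Phi> (RV {1..n} \<sigma>))"
    unfolding Z_def SS_def by (rule sum.cong) (auto simp: RV_def)
  also have "\<dots> = real (n choose j) * cyn j * SS {1..n - j} (\<lambda>r. ?\<Phi> (addj r j 1))"
    using decomp_sum2[of "{1..n}" j ?\<Phi>] j by simp
  also have "SS {1..n - j} (\<lambda>r. ?\<Phi> (addj r j 1)) = \<theta> j * Z \<theta> (n - j) (\<lambda>r. \<Psi> (addj r j 1))"
    unfolding Z_def SS_def sum_distrib_left
  proof (rule sum.cong[OF refl])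
    fix \<tau> assume "\<tau> \<in> {\<tau>. \<tau> permutes {1..n-j}}"
    hence t: "\<tau> permutes {1..n-j}" by simp
    have "wvN \<theta> n (addj (RV {1..n - j} \<tau>) j 1) = \<theta> j * wvN \<theta> n (RV {1..n - j} \<tau>)"
      using wvN_addj j by simp
    also have "wvN \<theta> n (RV {1..n - j} \<tau>) = wvN \<theta> (n - j) (RV {1..n - j} \<tau>)"
      by (rule wvN_mono) (use RV_big[OF t] in auto)
    finally show "?\<Phi> (addj (RV {1..n - j} \<tau>) j 1) =
        \<theta> j * (wvN \<theta> (n - j) (RV {1..n - j} \<tau>) * \<Psi> (addj (RV {1..n - j} \<tau>) j 1))" by simp
  qed
  also have "real (n choose j) * cyn j = fact n / (fact (n - j) * j)"
  proof -
    have "real (fact j * fact (n - j) * (n choose j)) = real (fact n)"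
      using binomial_fact_lemma[OF j(2)] by simp
    hence "fact j * fact (n - j) * real (n choose j) = fact n"
      by (simp only: of_nat_mult of_nat_fact)
    moreover have "fact j = real j * fact (j - 1)"
      using j(1) by (simp add: fact_reduce)
    ultimately show ?thesis using cyn_eq[OF j(1)] j(1) by (simp add: field_simps)
  qed
  finally show ?thesis by simp
qed

lemma Z_cong: "(\<And>\<sigma>. \<sigma> permutes {1..n} \<Longrightarrow> wvN \<theta> n (RV {1..n} \<sigma>) * \<Psi> (RV {1..n} \<sigma>) = wvN \<theta>' n (RV {1..n} \<sigma>) * \<Psi>' (RV {1..n} \<sigma>))
   \<Longrightarrow> Z \<theta> n \<Psi> = Z \<theta>' n \<Psi>'"
  unfolding Z_def SS_def by (rule sum.cong) auto

lemma markj: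
  assumes j: "1 \<le> j"
  shows "Z \<theta> n (\<lambda>r. (if r j = a then 1 else 0) * \<Psi> r) =
    (if j * a \<le> n then ((\<theta> j / j) ^ a / fact a) * (fact n / fact (n - j * a)) *
        Z (\<theta>(j := 0)) (n - j * a) (\<lambda>r. \<Psi> (addj r j a)) else 0)"
  using j
proof (induction a arbitrary: n \<Psi>)
  case 0
  have "Z \<theta> n (\<lambda>r. (if r j = 0 then 1 else 0) * \<Psi> r) = Z (\<theta>(j := 0)) n \<Psi>"
  proof (rule Z_cong)
    fix \<sigma> assume p: "\<sigma> permutes {1..n}"
    let ?r = "RV {1..n} \<sigma>"
    have "wvN \<theta> n ?r * (if ?r j = 0 then 1 else 0) = wvN (\<theta>(j := 0)) n ?r"
    proof (cases "j \<le> n")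
      case True
      hence jj: "j \<in> {1..n}" using 0 by auto
      have A: "wvN \<theta> n ?r = \<theta> j ^ ?r j * (\<Prod>i\<in>{1..n} - {j}. \<theta> i ^ ?r i)"
        unfolding wvN_def by (rule prod.remove[OF _ jj]) simp
      have B: "wvN (\<theta>(j := 0)) n ?r = (\<theta>(j := 0)) j ^ ?r j * (\<Prod>i\<in>{1..n} - {j}. (\<theta>(j := 0)) i ^ ?r i)"
        unfolding wvN_def by (rule prod.remove[OF _ jj]) simp
      have B2: "(\<Prod>i\<in>{1..n} - {j}. (\<theta>(j := 0)) i ^ ?r i) = (\<Prod>i\<in>{1..n} - {j}. \<theta> i ^ ?r i)"
        by (rule prod.cong) auto
      show ?thesis unfolding A B B2 by (cases "?r j = 0") auto
    next
      case False
      hence "?r j = 0" using RV_big[OF p] by simp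
      moreover have "wvN (\<theta>(j := 0)) n ?r = wvN \<theta> n ?r"
        unfolding wvN_def using False by (intro prod.cong) auto
      ultimately show ?thesis by simp
    qed
    thus "wvN \<theta> n ?r * ((if ?r j = 0 then 1 else 0) * \<Psi> ?r) = wvN (\<theta>(j := 0)) n ?r * \<Psi> ?r"
      by (metis mult.assoc)
  qed
  moreover have "(\<lambda>r. \<Psi> (addj r j 0)) = \<Psi>" by (simp add: addj_def)
  ultimately show ?case by simp
next
  case (Suc b)
  show ?case
  proof (cases "j \<le> n")
    case False
    have "Z \<theta> n (\<lambda>r. (if r j = Suc b then 1 else 0) * \<Psi> r) = Z \<theta> n (\<lambda>r. 0)"
      by (rule Z_cong) (use RV_big False in auto)
    moreover have "Z \<theta> n (\<lambda>r. 0) = 0" by (simp add: Z_def SS_def)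
    moreover have "\<not> j * Suc b \<le> n"
    proof -
      have "j \<le> j * Suc b" by simp
      thus ?thesis using False by linarith
    qed
    ultimately show ?thesis by simp
  next
    case True
    let ?\<Psi>1 = "\<lambda>r. (if r j = Suc b then 1 else 0) * \<Psi> r"
    have "Z \<theta> n (\<lambda>r. (if r j = Suc b then 1 else 0) * \<Psi> r) = Z \<theta> n (\<lambda>r. real (r j) * (?\<Psi>1 r / Suc b))"
      by (rule Z_cong) auto
    also have "\<dots> = \<theta> j * (fact n / (fact (n - j) * real j)) * Z \<theta> (n - j) (\<lambda>r. ?\<Psi>1 (addj r j 1) / Suc b)"
      by (rule markC[OF Suc.prems True])
    also have "Z \<theta> (n - j) (\<lambda>r. ?\<Psi>1 (addj r j 1) / Suc b) =
        Z \<theta> (n - j) (\<lambda>r. (if r j = b then 1 else 0) * (\<Psi> (addj r j 1) / Suc b))"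
      by (rule Z_cong) (auto simp: addj_def)
    also have "\<dots> = (if j * b \<le> n - j then ((\<theta> j / j) ^ b / fact b) * (fact (n - j) / fact (n - j - j * b)) *
        Z (\<theta>(j := 0)) (n - j - j * b) (\<lambda>r. \<Psi> (addj (addj r j b) j 1) / Suc b) else 0)"
      by (rule Suc.IH[OF Suc.prems])
    also have "(\<lambda>r. \<Psi> (addj (addj r j b) j 1) / Suc b) = (\<lambda>r. \<Psi> (addj r j (Suc b)) / Suc b)"
      by (simp add: addj_def)
    also have "Z (\<theta>(j := 0)) (n - j - j * b) (\<lambda>r. \<Psi> (addj r j (Suc b)) / Suc b) =
        Z (\<theta>(j := 0)) (n - j - j * b) (\<lambda>r. \<Psi> (addj r j (Suc b))) / Suc b"
      by (simp add: Z_def SS_def sum_divide_distrib)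
    also have "n - j - j * b = n - j * Suc b" by (simp add: diff_diff_left)
    also have "(j * b \<le> n - j) = (j * Suc b \<le> n)" using True by auto
    finally have X: "Z \<theta> n (\<lambda>r. (if r j = Suc b then 1 else 0) * \<Psi> r) =
      \<theta> j * (fact n / (fact (n - j) * real j)) *
      (if j * Suc b \<le> n then (\<theta> j / real j) ^ b / fact b * (fact (n - j) / fact (n - j * Suc b)) *
          (Z (\<theta>(j := 0)) (n - j * Suc b) (\<lambda>r. \<Psi> (addj r j (Suc b))) / real (Suc b)) else 0)" .
    show ?thesis
    proof (cases "j * Suc b \<le> n")
      case False thus ?thesis using X by simp
    next
      case c: True
      have alg: "t * (F / (G * real j)) * ((t / real j) ^ b / fact b * (G / H) * (W / real (Suc b))) =
          (t / real j) ^ Suc b / fact (Suc b) * (F / H) * W" if "G \<noteq> 0" "H \<noteq> 0" for t F G H W :: real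
        using that Suc.prems by (simp add: field_simps)
      let ?Z0 = "Z (\<theta>(j := 0)) (n - j * Suc b) (\<lambda>r. \<Psi> (addj r j (Suc b)))"
      have "Z \<theta> n (\<lambda>r. (if r j = Suc b then 1 else 0) * \<Psi> r) = \<theta> j * (fact n / (fact (n - j) * real j)) *
          ((\<theta> j / real j) ^ b / fact b * (fact (n - j) / fact (n - j * Suc b)) * (?Z0 / real (Suc b)))"
        using X c by simp
      also have "\<dots> = (\<theta> j / real j) ^ Suc b / fact (Suc b) * (fact n / fact (n - j * Suc b)) * ?Z0"
        by (rule alg) simp_all
      finally show ?thesis using c by simp
    qed
  qed
qed

definition Kf :: "nat \<Rightarrow> (nat \<Rightarrow> nat) \<Rightarrow> nat" where
  "Kf m a = (\<Sum>i\<in>{1..m}. i * a i)"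
definition zeroth :: "(nat \<Rightarrow> real) \<Rightarrow> nat \<Rightarrow> (nat \<Rightarrow> real)" where
  "zeroth \<theta> m = (\<lambda>i. if i \<in> {1..m} then 0 else \<theta> i)"
definition addv :: "(nat \<Rightarrow> nat) \<Rightarrow> (nat \<Rightarrow> nat) \<Rightarrow> nat \<Rightarrow> (nat \<Rightarrow> nat)" where
  "addv r a m = (\<lambda>i. if i \<in> {1..m} then r i + a i else r i)"
definition Cprod :: "(nat \<Rightarrow> real) \<Rightarrow> (nat \<Rightarrow> nat) \<Rightarrow> nat \<Rightarrow> real" where
  "Cprod \<theta> a m = (\<Prod>i\<in>{1..m}. (\<theta> i / real i) ^ a i / fact (a i))"

lemma markm:
  "Z \<theta> n (\<lambda>r. (if \<forall>i\<in>{1..m}. r i = a i then 1 else 0) * \<Psi> r) =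
    (if Kf m a \<le> n then Cprod \<theta> a m * (fact n / fact (n - Kf m a)) *
       Z (zeroth \<theta> m) (n - Kf m a) (\<lambda>r. \<Psi> (addv r a m)) else 0)"
proof (induction m arbitrary: \<theta> n \<Psi>)
  case 0
  have "zeroth \<theta> 0 = \<theta>" by (simp add: zeroth_def)
  moreover have "(\<lambda>r. \<Psi> (addv r a 0)) = \<Psi>" by (simp add: addv_def)
  ultimately show ?case by (simp add: Kf_def Cprod_def)
next
  case (Suc m)
  let ?j = "Suc m"
  let ?\<theta>' = "\<theta>(?j := 0)" and ?n' = "n - ?j * a ?j"
  let ?\<Psi>' = "\<lambda>r. \<Psi> (addj r ?j (a ?j))"
  let ?\<Psi>1 = "\<lambda>r. (if \<forall>i\<in>{1..m}. r i = a i then 1 else 0) * \<Psi> r"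
  have "(\<lambda>r. (if \<forall>i\<in>{1..Suc m}. r i = a i then 1 else 0) * \<Psi> r) =
        (\<lambda>r. (if r ?j = a ?j then 1 else 0) * ?\<Psi>1 r)"
    by (auto simp: atLeastAtMostSuc_conv)
  hence "Z \<theta> n (\<lambda>r. (if \<forall>i\<in>{1..Suc m}. r i = a i then 1 else 0) * \<Psi> r) =
     (if ?j * a ?j \<le> n then ((\<theta> ?j / ?j) ^ a ?j / fact (a ?j)) * (fact n / fact ?n') *
        Z ?\<theta>' ?n' (\<lambda>r. ?\<Psi>1 (addj r ?j (a ?j))) else 0)"
    using markj[of ?j \<theta> n "a ?j" ?\<Psi>1] by simp
  also have "(\<lambda>r. ?\<Psi>1 (addj r ?j (a ?j))) = (\<lambda>r. (if \<forall>i\<in>{1..m}. r i = a i then 1 else 0) * ?\<Psi>' r)"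
    by (auto simp: addj_def)
  also have "Z ?\<theta>' ?n' (\<lambda>r. (if \<forall>i\<in>{1..m}. r i = a i then 1 else 0) * ?\<Psi>' r) =
     (if Kf m a \<le> ?n' then Cprod ?\<theta>' a m * (fact ?n' / fact (?n' - Kf m a)) *
       Z (zeroth ?\<theta>' m) (?n' - Kf m a) (\<lambda>r. ?\<Psi>' (addv r a m)) else 0)"
    by (rule Suc.IH)
  also have "Cprod ?\<theta>' a m = Cprod \<theta> a m" unfolding Cprod_def by (rule prod.cong) auto
  also have "zeroth ?\<theta>' m = zeroth \<theta> (Suc m)" by (auto simp: zeroth_def fun_eq_iff le_Suc_eq)
  also have "(\<lambda>r. ?\<Psi>' (addv r a m)) = (\<lambda>r. \<Psi> (addv r a (Suc m)))"
  proof -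
    have "addj (addv r a m) ?j (a ?j) = addv r a (Suc m)" for r
      by (auto simp: addj_def addv_def)
    thus ?thesis by simp
  qed
  also have "?n' - Kf m a = n - Kf (Suc m) a" by (simp add: Kf_def)
  finally have X: "Z \<theta> n (\<lambda>r. (if \<forall>i\<in>{1..Suc m}. r i = a i then 1 else 0) * \<Psi> r) =
    (if ?j * a ?j \<le> n then (\<theta> ?j / real ?j) ^ a ?j / fact (a ?j) * (fact n / fact ?n') *
      (if Kf m a \<le> ?n' then Cprod \<theta> a m * (fact ?n' / fact (n - Kf (Suc m) a)) *
       Z (zeroth \<theta> (Suc m)) (n - Kf (Suc m) a) (\<lambda>r. \<Psi> (addv r a (Suc m))) else 0) else 0)" .
  have K: "Kf (Suc m) a = Kf m a + ?j * a ?j" by (simp add: Kf_def)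
  have Cp: "Cprod \<theta> a (Suc m) = Cprod \<theta> a m * ((\<theta> ?j / real ?j) ^ a ?j / fact (a ?j))"
    by (simp add: Cprod_def)
  show ?case
  proof (cases "Kf (Suc m) a \<le> n")
    case False
    hence "\<not> (?j * a ?j \<le> n \<and> Kf m a \<le> ?n')" using K by linarith
    thus ?thesis using X False by auto
  next
    case True
    hence c: "?j * a ?j \<le> n" "Kf m a \<le> ?n'" using K by linarith+
    have alg: "L * (F / G) * (C * (G / H) * W) = C * L * (F / H) * W" if "G \<noteq> 0" for L F G H C W :: real
      using that by (simp add: field_simps)
    show ?thesis unfolding X Cp using c True by (simp add: alg)
  qed
qed

lemma perm_weight_eq: "perm_weight \<theta> n \<sigma> = wvN \<theta> n (RV {1..n} \<sigma>)"
  unfolding perm_weight_def wvN_def RV_def cyc_count_def cc_def by simp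

definition hz :: "(nat \<Rightarrow> real) \<Rightarrow> nat \<Rightarrow> real" where
  "hz t n = Z t n (\<lambda>_. 1) / fact n"

lemma Z_one: "Z \<theta> n (\<lambda>_. 1) = (\<Sum>\<sigma>\<in>{\<sigma>. \<sigma> permutes {1..n}}. perm_weight \<theta> n \<sigma>)"
  unfolding Z_def SS_def perm_weight_eq by simp

lemma hh_hz: "hh \<theta> n = hz \<theta> n"
proof (cases "n = 0")
  case True
  have "{\<sigma>. \<sigma> permutes {1..0::nat}} = {id}" by (simp add: permutes_empty)
  moreover have "perm_weight \<theta> 0 id = 1" by (simp add: perm_weight_def)
  ultimately show ?thesis using True unfolding hh_def hz_def Z_one by simp
next
  case False thus ?thesis unfolding hh_def hz_def Z_one by simp
qed

lemma Z_sum: "finite A \<Longrightarrow> Z \<theta> n (\<lambda>r. \<Sum>a\<in>A. F a r) = (\<Sum>a\<in>A. Z \<theta> n (F a))"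
  unfolding Z_def SS_def sum_distrib_left by (rule sum.swap)

lemma hz_rec:
  assumes j: "1 \<le> j"
  shows "hz t n = (\<Sum>a\<le>n. if j * a \<le> n then (t j / j) ^ a / fact a * hz (t(j := 0)) (n - j * a) else 0)"
proof -
  have "Z t n (\<lambda>_. 1) = Z t n (\<lambda>r. \<Sum>a\<le>n. (if r j = a then 1 else 0) * 1)"
  proof (rule Z_cong)
    fix \<sigma> assume p: "\<sigma> permutes {1..n}"
    have "RV {1..n} \<sigma> j \<le> n" unfolding RV_def using cc_le[of "{1..n}" \<sigma> j] p by simp
    hence "(\<Sum>a\<le>n. (if RV {1..n} \<sigma> j = a then 1 else 0) * 1) = (1::real)"
      by (simp add: sum.delta)
    thus "wvN t n (RV {1..n} \<sigma>) * 1 = wvN t n (RV {1..n} \<sigma>) * (\<Sum>a\<le>n. (if RV {1..n} \<sigma> j = a then 1 else 0) * 1)"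
      by simp
  qed
  also have "\<dots> = (\<Sum>a\<le>n. Z t n (\<lambda>r. (if r j = a then 1 else 0) * 1))" by (rule Z_sum) simp
  also have "\<dots> = (\<Sum>a\<le>n. if j * a \<le> n then (t j / j) ^ a / fact a * (fact n / fact (n - j * a)) *
        Z (t(j := 0)) (n - j * a) (\<lambda>_. 1) else 0)"
    by (rule sum.cong[OF refl]) (simp add: markj[OF j, of t n _ "\<lambda>_. 1", simplified])
  finally have "hz t n = (\<Sum>a\<le>n. if j * a \<le> n then (t j / j) ^ a / fact a * (fact n / fact (n - j * a)) *
        Z (t(j := 0)) (n - j * a) (\<lambda>_. 1) else 0) / fact n" unfolding hz_def by simp
  also have "\<dots> = (\<Sum>a\<le>n. if j * a \<le> n then (t j / j) ^ a / fact a * hz (t(j := 0)) (n - j * a) else 0)"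
    unfolding sum_divide_distrib by (rule sum.cong[OF refl]) (simp add: hz_def)
  finally show ?thesis .
qed

lemma Pn_sum_eq:
  assumes hpos: "hh \<theta> n > 0" and supp: "\<And>i. i \<notin> {1..m} \<Longrightarrow> a i = 0"
  shows "(\<Sum>\<sigma>\<in>{\<sigma>. \<sigma> permutes {1..n}}. Pn \<theta> n \<sigma> * (if cyc_vec m n \<sigma> = a then 1 else 0)) =
    (if Kf m a \<le> n then Cprod \<theta> a m * hz (zeroth \<theta> m) (n - Kf m a) / hh \<theta> n else 0)"
proof -
  have cv: "(cyc_vec m n \<sigma> = a) = (\<forall>i\<in>{1..m}. RV {1..n} \<sigma> i = a i)" for \<sigma>
    unfolding cyc_vec_def RV_def cyc_count_def cc_def using supp by (auto simp: fun_eq_iff)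
  have "(\<Sum>\<sigma>\<in>{\<sigma>. \<sigma> permutes {1..n}}. Pn \<theta> n \<sigma> * (if cyc_vec m n \<sigma> = a then 1 else 0)) =
     Z \<theta> n (\<lambda>r. (if \<forall>i\<in>{1..m}. r i = a i then 1 else 0) * 1) / (fact n * hh \<theta> n)"
    unfolding Z_def SS_def Pn_def perm_weight_eq cv sum_divide_distrib by (rule sum.cong) auto
  also have "\<dots> = (if Kf m a \<le> n then Cprod \<theta> a m * (fact n / fact (n - Kf m a)) *
       Z (zeroth \<theta> m) (n - Kf m a) (\<lambda>_. 1) else 0) / (fact n * hh \<theta> n)"
    unfolding markm by simp
  also have "\<dots> = (if Kf m a \<le> n then Cprod \<theta> a m * hz (zeroth \<theta> m) (n - Kf m a) / hh \<theta> n else 0)"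
    using hpos by (auto simp: hz_def field_simps)
  finally show ?thesis .
qed

lemma sum_div_form:
  assumes j: "1 \<le> (j::nat)"
  shows "(\<Sum>a\<le>n. if j * a \<le> n then F a else 0) = (\<Sum>a\<le>n div j. F a)"
proof -
  have iff: "j * a \<le> n \<longleftrightarrow> a \<le> n div j" for a
    using j by (simp add: less_eq_div_iff_mult_less_eq mult.commute)
  have "(\<Sum>a\<le>n. if j * a \<le> n then F a else 0) = (\<Sum>a\<in>{a\<in>{..n}. j * a \<le> n}. F a)"
    by (simp add: sum.inter_filter[symmetric])
  also have "{a\<in>{..n}. j * a \<le> n} = {..n div j}"
  proof -
    have "n div j \<le> n" by simp
    thus ?thesis using iff by (auto intro: le_trans)
  qed
  finally show ?thesis .
qed

lemma binom_cancel:
  "(\<Sum>a\<le>c. (-x) ^ a / fact a * (x ^ (c - a) / fact (c - a))) = (if c = 0 then 1 else (0::real))"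
proof -
  have "(\<Sum>a\<le>c. (-x) ^ a / fact a * (x ^ (c - a) / fact (c - a))) =
        (\<Sum>a\<le>c. real (c choose a) * (-x) ^ a * x ^ (c - a)) / fact c"
    unfolding sum_divide_distrib
    by (rule sum.cong[OF refl]) (simp add: binomial_fact field_simps)
  also have "(\<Sum>a\<le>c. real (c choose a) * (-x) ^ a * x ^ (c - a)) = (-x + x) ^ c"
    by (rule binomial_ring[symmetric])
  finally show ?thesis by simp
qed

lemma div_diff_nat:
  assumes "(a::nat) \<le> n div j" "1 \<le> j"
  shows "(n - j * a) div j = n div j - a"
proof -
  have "j * a \<le> n" using assms by (simp add: less_eq_div_iff_mult_less_eq mult.commute)
  then obtain m where m: "n = j * a + m" using le_Suc_ex by blast
  hence "n - j * a = m" by simp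
  moreover have "n div j = a + m div j" using m assms(2) by simp
  ultimately show ?thesis by simp
qed

lemma conv_inv:
  fixes g h :: "nat \<Rightarrow> real"
  assumes j: "1 \<le> j"
    and H: "\<And>n. h n = (\<Sum>a\<le>n. if j * a \<le> n then x ^ a / fact a * g (n - j * a) else 0)"
  shows "g n = (\<Sum>a\<le>n. if j * a \<le> n then (-x) ^ a / fact a * h (n - j * a) else 0)"
proof -
  define N where "N = n div j"
  have H': "h k = (\<Sum>b\<le>k div j. x ^ b / fact b * g (k - j * b))" for k
    using H[of k] sum_div_form[OF j, of k "\<lambda>b. x ^ b / fact b * g (k - j * b)"] by simp
  have "(\<Sum>a\<le>n. if j * a \<le> n then (-x) ^ a / fact a * h (n - j * a) else 0) =
        (\<Sum>a\<le>N. (-x) ^ a / fact a * h (n - j * a))"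
    unfolding N_def by (rule sum_div_form[OF j])
  also have "\<dots> = (\<Sum>a\<le>N. \<Sum>b\<le>N - a. (-x) ^ a / fact a * (x ^ b / fact b * g (n - j * (a + b))))"
  proof (rule sum.cong[OF refl])
    fix a assume "a \<in> {..N}"
    hence a: "a \<le> n div j" by (simp add: N_def)
    have "h (n - j * a) = (\<Sum>b\<le>N - a. x ^ b / fact b * g (n - j * a - j * b))"
      unfolding H' div_diff_nat[OF a j] N_def ..
    also have "\<dots> = (\<Sum>b\<le>N - a. x ^ b / fact b * g (n - j * (a + b)))"
      by (simp add: diff_diff_left distrib_left)
    finally show "(-x) ^ a / fact a * h (n - j * a) =
        (\<Sum>b\<le>N - a. (-x) ^ a / fact a * (x ^ b / fact b * g (n - j * (a + b))))"
      by (simp add: sum_distrib_left)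
  qed
  also have "\<dots> = (\<Sum>(a, b)\<in>{(a, b). a + b \<le> N}. (-x) ^ a / fact a * (x ^ b / fact b * g (n - j * (a + b))))"
  proof -
    have "{(a, b). a + b \<le> N} = Sigma {..N} (\<lambda>a. {..N - a})" by auto
    thus ?thesis by (simp add: sum.Sigma)
  qed
  also have "\<dots> = (\<Sum>c\<le>N. \<Sum>a\<le>c. (-x) ^ a / fact a * (x ^ (c - a) / fact (c - a) * g (n - j * c)))"
    (is "_ = ?R")
  proof -
    have "(\<Sum>(a, b)\<in>{(a, b). a + b \<le> N}. (-x) ^ a / fact a * (x ^ b / fact b * g (n - j * (a + b)))) =
      (\<Sum>c\<le>N. \<Sum>a\<le>c. (-x) ^ a / fact a * (x ^ (c - a) / fact (c - a) * g (n - j * (a + (c - a)))))"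
      by (rule sum.triangle_reindex_eq)
    also have "\<dots> = ?R"
      by (intro sum.cong[OF refl]) simp
    finally show ?thesis .
  qed
  also have "\<dots> = (\<Sum>c\<le>N. (if c = 0 then 1 else 0) * g (n - j * c))"
  proof (rule sum.cong[OF refl])
    fix c
    have "(\<Sum>a\<le>c. (-x) ^ a / fact a * (x ^ (c - a) / fact (c - a) * g (n - j * c))) =
          (\<Sum>a\<le>c. (-x) ^ a / fact a * (x ^ (c - a) / fact (c - a))) * g (n - j * c)"
      by (simp add: sum_distrib_right mult.assoc)
    thus "(\<Sum>a\<le>c. (-x) ^ a / fact a * (x ^ (c - a) / fact (c - a) * g (n - j * c))) =
          (if c = 0 then 1 else 0) * g (n - j * c)" unfolding binom_cancel .
  qed
  also have "\<dots> = (\<Sum>c\<le>N. if c = 0 then g (n - j * c) else 0)"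
    by (rule sum.cong) auto
  also have "\<dots> = g n" by (subst sum.delta) auto
  finally show ?thesis by simp
qed

lemma exp_sums_real: "(\<lambda>a. (x::real) ^ a / fact a) sums exp x"
  using exp_converges[of x] by (simp add: divide_inverse mult.commute)

lemma exp_partial_le:
  assumes "(x::real) \<ge> 0" and that: "finite A" shows "(\<Sum>a\<in>A. x ^ a / fact a) \<le> exp x"
proof -
  have "(\<Sum>a\<in>A. x ^ a / fact a) \<le> suminf (\<lambda>a. x ^ a / fact a)"
    by (rule sum_le_suminf[OF sums_summable[OF exp_sums_real] that]) (use assms in auto)
  thus ?thesis using sums_unique[OF exp_sums_real[of x]] by simp
qed

lemma tannery_step:
  fixes f g h :: "nat \<Rightarrow> real"
  assumes j: "1 \<le> j" and lam: "q \<ge> 0" and B: "B \<ge> 1" and C: "C \<ge> 0"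
    and hpos: "\<And>n. h n > 0"
    and F: "\<And>n. f n = (\<Sum>a\<le>n. if j * a \<le> n then (-q) ^ a / fact a * g (n - j * a) else 0)"
    and gb: "\<And>n d. d \<le> n \<Longrightarrow> \<bar>g (n - d)\<bar> \<le> C * B ^ d * h n"
    and gl: "\<And>d. (\<lambda>n. g (n - d) / h n) \<longlonglongrightarrow> L"
  shows "\<And>n d. d \<le> n \<Longrightarrow> \<bar>f (n - d)\<bar> \<le> (C * exp (q * B ^ j)) * B ^ d * h n"
    and "\<And>d. (\<lambda>n. f (n - d) / h n) \<longlonglongrightarrow> exp (-q) * L"
proof -
  have pw: "B ^ (d + j * a) = B ^ d * (B ^ j) ^ a" "B ^ (d + a * j) = B ^ d * (B ^ j) ^ a" for d a
    by (simp_all add: power_add mult.commute flip: power_mult)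
  fix n d :: nat assume dn: "d \<le> n"
  have "\<bar>f (n - d)\<bar> \<le> (\<Sum>a\<le>n - d. \<bar>if j * a \<le> n - d then (-q) ^ a / fact a * g (n - d - j * a) else 0\<bar>)"
    unfolding F by (rule sum_abs)
  also have "\<dots> \<le> (\<Sum>a\<le>n - d. C * B ^ d * h n * ((q * B ^ j) ^ a / fact a))"
  proof (rule sum_mono)
    fix a assume "a \<in> {..n - d}"
    show "\<bar>if j * a \<le> n - d then (-q) ^ a / fact a * g (n - d - j * a) else 0\<bar> \<le> C * B ^ d * h n * ((q * B ^ j) ^ a / fact a)"
    proof (cases "j * a \<le> n - d")
      case True
      have le: "d + j * a \<le> n" using True dn by linarith
      have "\<bar>g (n - d - j * a)\<bar> = \<bar>g (n - (d + j * a))\<bar>" by (simp add: diff_diff_left)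
      also have "\<dots> \<le> C * B ^ (d + j * a) * h n" by (rule gb[OF le])
      finally have gle: "\<bar>g (n - d - j * a)\<bar> \<le> C * B ^ (d + j * a) * h n" .
      have "\<bar>(-q) ^ a / fact a * g (n - d - j * a)\<bar> = q ^ a / fact a * \<bar>g (n - d - j * a)\<bar>"
        using lam by (simp add: abs_mult power_abs)
      also have "\<dots> \<le> q ^ a / fact a * (C * B ^ (d + j * a) * h n)"
        by (rule mult_left_mono[OF gle]) (use lam in auto)
      also have "\<dots> = C * B ^ d * h n * ((q * B ^ j) ^ a / fact a)"
        by (simp add: pw power_mult_distrib mult.commute mult.left_commute)
      finally show ?thesis using True by simp
    next
      case False
      have "0 \<le> C * B ^ d * h n * ((q * B ^ j) ^ a / fact a)"
        using C B lam hpos[of n] by (intro mult_nonneg_nonneg) (auto intro: less_imp_le)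
      thus ?thesis using False by simp
    qed
  qed
  also have "\<dots> = C * B ^ d * h n * (\<Sum>a\<le>n - d. (q * B ^ j) ^ a / fact a)"
    by (simp add: sum_distrib_left)
  also have "\<dots> \<le> C * B ^ d * h n * exp (q * B ^ j)"
    by (rule mult_left_mono[OF exp_partial_le]) (use C B lam hpos[of n] in \<open>auto intro!: mult_nonneg_nonneg less_imp_le\<close>)
  finally show "\<bar>f (n - d)\<bar> \<le> (C * exp (q * B ^ j)) * B ^ d * h n" by (simp add: mult_ac)
next
  have pw: "B ^ (d + j * a) = B ^ d * (B ^ j) ^ a" "B ^ (d + a * j) = B ^ d * (B ^ j) ^ a" for d a
    by (simp_all add: power_add mult.commute flip: power_mult)
  fix d :: nat
  define A where "A = (\<lambda>a n. if d + j * a \<le> n then (-q) ^ a / fact a * (g (n - (d + j * a)) / h n) else 0)"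
  define M where "M = (\<lambda>a. C * B ^ d * ((q * B ^ j) ^ a / fact a))"
  have lim: "(\<lambda>n. A a n) \<longlonglongrightarrow> (-q) ^ a / fact a * L" for a
  proof -
    have "(\<lambda>n. (-q) ^ a / fact a * (g (n - (d + j * a)) / h n)) \<longlonglongrightarrow> (-q) ^ a / fact a * L"
      by (intro tendsto_mult_left gl)
    moreover have "eventually (\<lambda>n. (-q) ^ a / fact a * (g (n - (d + j * a)) / h n) = A a n) sequentially"
      using eventually_ge_at_top[of "d + j * a"] by eventually_elim (simp add: A_def)
    ultimately show ?thesis by (rule Lim_transform_eventually)
  qed
  have bound: "eventually (\<lambda>(a, n). norm (A a n) \<le> M a) (at_top \<times>\<^sub>F sequentially)"
  proof (rule always_eventually, clarify)
    fix a n
    show "norm (A a n) \<le> M a"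
    proof (cases "d + j * a \<le> n")
      case True
      have "\<bar>g (n - (d + j * a))\<bar> / h n \<le> C * B ^ (d + j * a)"
        using gb[OF True] hpos[of n] by (simp add: divide_le_eq)
      hence "q ^ a / fact a * (\<bar>g (n - (d + j * a))\<bar> / h n) \<le> q ^ a / fact a * (C * B ^ (d + j * a))"
        by (rule mult_left_mono) (use lam in auto)
      moreover have "norm (A a n) = q ^ a / fact a * (\<bar>g (n - (d + j * a))\<bar> / h n)"
        using True lam hpos[of n] by (simp add: A_def abs_mult power_abs)
      moreover have "q ^ a / fact a * (C * B ^ (d + j * a)) = M a"
        by (simp add: M_def pw power_mult_distrib mult.commute mult.left_commute)
      ultimately show ?thesis by simp
    next
      case False
      thus ?thesis using C B lam by (auto simp: A_def M_def intro!: mult_nonneg_nonneg)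
    qed
  qed
  have summ: "summable M" unfolding M_def
    by (intro summable_mult sums_summable[OF exp_sums_real])
  have T: "(\<lambda>n. suminf (\<lambda>a. A a n)) \<longlonglongrightarrow> suminf (\<lambda>a. (-q) ^ a / fact a * L)"
    using tannerys_theorem[OF lim bound summ] by simp
  have "suminf (\<lambda>a. (-q) ^ a / fact a * L) = exp (-q) * L"
    using sums_unique[OF sums_mult2[OF exp_sums_real[of "-q"], of L]] by simp
  hence T2: "(\<lambda>n. suminf (\<lambda>a. A a n)) \<longlonglongrightarrow> exp (-q) * L" using T by simp
  have ev: "eventually (\<lambda>n. suminf (\<lambda>a. A a n) = f (n - d) / h n) sequentially"
    using eventually_ge_at_top[of d]
  proof eventually_elim
    case (elim n)
    have "suminf (\<lambda>a. A a n) = (\<Sum>a\<le>n - d. A a n)"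
    proof (rule suminf_finite)
      show "\<And>a. a \<notin> {..n - d} \<Longrightarrow> A a n = 0"
      proof -
        fix a assume "a \<notin> {..n - d}"
        hence "a > n - d" by simp
        moreover have "a \<le> j * a" using j by simp
        ultimately have "\<not> d + j * a \<le> n" using elim by linarith
        thus "A a n = 0" by (simp add: A_def)
      qed
    qed simp
    also have "\<dots> = f (n - d) / h n"
      unfolding F sum_divide_distrib
    proof (rule sum.cong[OF refl])
      fix a assume "a \<in> {..n - d}"
      have "(d + j * a \<le> n) = (j * a \<le> n - d)" using elim by linarith
      moreover have "n - (d + j * a) = n - d - j * a" by (simp add: diff_diff_left)
      ultimately show "A a n = (if j * a \<le> n - d then (-q) ^ a / fact a * g (n - d - j * a) else 0) / h n"
        by (simp add: A_def)
    qed
    finally show ?case .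
  qed
  show "(\<lambda>n. f (n - d) / h n) \<longlonglongrightarrow> exp (-q) * L"
    by (rule Lim_transform_eventually[OF T2 ev])
qed

lemma ratio_lims:
  fixes h :: "nat \<Rightarrow> real"
  assumes hpos: "\<And>n. h n > 0" and ratio: "(\<lambda>n. h (n - 1) / h n) \<longlonglongrightarrow> 1"
  shows "(\<lambda>n. h (n - d) / h n) \<longlonglongrightarrow> 1"
proof (induction d)
  case 0
  show ?case using hpos by (simp add: less_imp_neq[symmetric])
next
  case (Suc d)
  have r: "(\<lambda>n. h (n - d - 1) / h (n - d)) \<longlonglongrightarrow> 1"
    using filterlim_compose[OF ratio filterlim_minus_const_nat_at_top[of d]] by simp
  have T: "(\<lambda>n. h (n - d - 1) / h (n - d) * (h (n - d) / h n)) \<longlonglongrightarrow> 1 * 1"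
    by (intro tendsto_mult r Suc.IH)
  have eq: "h (n - d - 1) / h (n - d) * (h (n - d) / h n) = h (n - Suc d) / h n" for n
    using hpos[of "n - d"] by (simp add: diff_diff_left)
  show ?case using T unfolding eq by simp
qed

lemma ratio_bound:
  fixes h :: "nat \<Rightarrow> real"
  assumes hpos: "\<And>n. h n > 0" and ratio: "(\<lambda>n. h (n - 1) / h n) \<longlonglongrightarrow> 1"
  obtains B where "B \<ge> 1" "\<And>n. h (n - 1) \<le> B * h n"
proof -
  have "Bseq (\<lambda>n. h (n - 1) / h n)" using ratio by (intro convergent_imp_Bseq convergentI)
  then obtain K where K: "K > 0" "\<And>n. norm (h (n - 1) / h n) \<le> K" unfolding Bseq_def by blast
  have "h (n - 1) \<le> max 1 K * h n" for n
  proof -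
    have "h (n - 1) / h n \<le> K" using K(2)[of n] by (metis abs_ge_self order_trans real_norm_def)
    hence "h (n - 1) \<le> K * h n" using hpos[of n] by (simp add: divide_le_eq)
    also have "\<dots> \<le> max 1 K * h n" using hpos[of n] by (intro mult_right_mono) auto
    finally show ?thesis .
  qed
  thus ?thesis using that[of "max 1 K"] by simp
qed

lemma h_bound:
  fixes h :: "nat \<Rightarrow> real"
  assumes hpos: "\<And>n. h n > 0" and B: "B \<ge> 1" and Bnd: "\<And>n. h (n - 1) \<le> B * h n"
  shows "h (n - d) \<le> B ^ d * h n"
proof (induction d)
  case 0 thus ?case by simp
next
  case (Suc d)
  have "h (n - Suc d) = h (n - d - 1)" by (simp add: diff_diff_left)
  also have "\<dots> \<le> B * h (n - d)" by (rule Bnd)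
  also have "\<dots> \<le> B * (B ^ d * h n)" using Suc.IH B by (intro mult_left_mono) auto
  finally show ?case by simp
qed

definition Lam :: "(nat \<Rightarrow> real) \<Rightarrow> nat \<Rightarrow> real" where
  "Lam \<theta> k = (\<Sum>i\<in>{1..k}. \<theta> i / real i)"

lemma hk_limit:
  assumes nonneg: "\<And>j. j \<ge> 1 \<Longrightarrow> \<theta> j \<ge> 0" and hpos: "\<And>n. hh \<theta> n > 0"
    and B: "B \<ge> 1" and Bnd: "\<And>n. hh \<theta> (n - 1) \<le> B * hh \<theta> n"
    and lim1: "\<And>d. (\<lambda>n. hh \<theta> (n - d) / hh \<theta> n) \<longlonglongrightarrow> 1"
  shows "\<exists>C\<ge>0. (\<forall>n d. d \<le> n \<longrightarrow> \<bar>hz (zeroth \<theta> k) (n - d)\<bar> \<le> C * B ^ d * hh \<theta> n) \<and>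
      (\<forall>d. (\<lambda>n. hz (zeroth \<theta> k) (n - d) / hh \<theta> n) \<longlonglongrightarrow> exp (- Lam \<theta> k))"
proof (induction k)
  case 0
  have z: "zeroth \<theta> 0 = \<theta>" by (simp add: zeroth_def)
  have "\<bar>hz \<theta> (n - d)\<bar> \<le> 1 * B ^ d * hh \<theta> n" for n d
    using h_bound[of "hh \<theta>", OF hpos B Bnd] hpos[of "n - d"] by (simp add: hh_hz[symmetric])
  moreover have "(\<lambda>n. hz \<theta> (n - d) / hh \<theta> n) \<longlonglongrightarrow> exp (- Lam \<theta> 0)" for d
    using lim1[of d] by (simp add: hh_hz[symmetric] Lam_def)
  ultimately show ?case unfolding z by (intro exI[of _ 1]) auto
next
  case (Suc k)
  then obtain C where C: "C \<ge> 0" "\<And>n d. d \<le> n \<Longrightarrow> \<bar>hz (zeroth \<theta> k) (n - d)\<bar> \<le> C * B ^ d * hh \<theta> n"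
    "\<And>d. (\<lambda>n. hz (zeroth \<theta> k) (n - d) / hh \<theta> n) \<longlonglongrightarrow> exp (- Lam \<theta> k)" by blast
  let ?j = "Suc k"
  let ?q = "\<theta> ?j / real ?j"
  have tj: "zeroth \<theta> k ?j = \<theta> ?j" by (simp add: zeroth_def)
  have t0: "(zeroth \<theta> k)(?j := 0) = zeroth \<theta> (Suc k)" by (auto simp: zeroth_def fun_eq_iff le_Suc_eq)
  have q: "?q \<ge> 0" using nonneg[of ?j] by simp
  have H: "hz (zeroth \<theta> k) n = (\<Sum>a\<le>n. if ?j * a \<le> n then ?q ^ a / fact a * hz (zeroth \<theta> (Suc k)) (n - ?j * a) else 0)" for n
    using hz_rec[of ?j "zeroth \<theta> k" n] unfolding tj t0 by simp
  have F: "hz (zeroth \<theta> (Suc k)) n = (\<Sum>a\<le>n. if ?j * a \<le> n then (-?q) ^ a / fact a * hz (zeroth \<theta> k) (n - ?j * a) else 0)" for n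
    by (rule conv_inv[of ?j "hz (zeroth \<theta> k)" ?q]) (use H in auto)
  note ts = tannery_step[of ?j ?q B C "hh \<theta>" "hz (zeroth \<theta> (Suc k))" "hz (zeroth \<theta> k)" "exp (- Lam \<theta> k)",
      OF _ q B C(1) hpos F C(2) C(3)]
  have "exp (-?q) * exp (- Lam \<theta> k) = exp (- Lam \<theta> (Suc k))"
    by (simp add: Lam_def exp_add[symmetric])
  moreover have "C * exp (?q * B ^ ?j) \<ge> 0" using C(1) by simp
  ultimately show ?case using ts by (intro exI[of _ "C * exp (?q * B ^ ?j)"]) auto
qed

lemma pmf_poisson_gen:
  assumes "r \<ge> 0" shows "pmf (poisson r) k = r ^ k / fact k * exp (-r)"
proof (cases "r > 0")
  case True thus ?thesis by (simp add: poisson_def pmf_poisson[OF True])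
next
  case False
  hence "r = 0" using assms by simp
  thus ?thesis by (cases k) (simp_all add: poisson_def pmf_return)
qed

lemma pmf_limit:
  assumes nonneg: "\<And>j. j \<ge> 1 \<Longrightarrow> \<theta> j \<ge> 0" and supp: "\<And>i. i \<notin> {1..m} \<Longrightarrow> a i = 0"
  shows "pmf (poisson_limit \<theta> m) a = Cprod \<theta> a m * exp (- Lam \<theta> m)"
proof -
  have "pmf (poisson_limit \<theta> m) a = (\<Prod>j\<in>{1..m}. pmf (poisson (\<theta> j / real j)) (a j))"
    unfolding poisson_limit_def using supp by (subst pmf_Pi) auto
  also have "\<dots> = (\<Prod>j\<in>{1..m}. (\<theta> j / real j) ^ a j / fact (a j) * exp (- (\<theta> j / real j)))"
    by (rule prod.cong[OF refl]) (rule pmf_poisson_gen, use nonneg in auto)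
  also have "\<dots> = Cprod \<theta> a m * (\<Prod>j\<in>{1..m}. exp (- (\<theta> j / real j)))"
    unfolding Cprod_def by (rule prod.distrib)
  also have "(\<Prod>j\<in>{1..m}. exp (- (\<theta> j / real j))) = exp (- Lam \<theta> m)"
    unfolding Lam_def by (simp add: exp_sum[symmetric] sum_negf)
  finally show ?thesis .
qed

lemma pn_limit:
  assumes nonneg: "\<And>j. j \<ge> 1 \<Longrightarrow> \<theta> j \<ge> 0"
    and hpos: "\<And>n. hh \<theta> n > 0"
    and ratio: "(\<lambda>n. hh \<theta> (n - 1) / hh \<theta> n) \<longlonglongrightarrow> 1"
    and supp: "\<And>i. i \<notin> {1..m} \<Longrightarrow> a i = 0"
  shows "(\<lambda>n. \<Sum>\<sigma>\<in>{\<sigma>. \<sigma> permutes {1..n}}. Pn \<theta> n \<sigma> * (if cyc_vec m n \<sigma> = a then 1 else 0))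
           \<longlonglongrightarrow> pmf (poisson_limit \<theta> m) a"
proof -
  obtain B where B: "B \<ge> 1" "\<And>n. hh \<theta> (n - 1) \<le> B * hh \<theta> n"
    using ratio_bound[of "hh \<theta>", OF hpos ratio] by blast
  have lim1: "\<And>d. (\<lambda>n. hh \<theta> (n - d) / hh \<theta> n) \<longlonglongrightarrow> 1"
    using ratio_lims[of "hh \<theta>", OF hpos ratio] by blast
  obtain C where "(\<forall>d. (\<lambda>n. hz (zeroth \<theta> m) (n - d) / hh \<theta> n) \<longlonglongrightarrow> exp (- Lam \<theta> m))"
    using hk_limit[OF nonneg hpos B lim1, of m] by blast
  hence L: "(\<lambda>n. hz (zeroth \<theta> m) (n - Kf m a) / hh \<theta> n) \<longlonglongrightarrow> exp (- Lam \<theta> m)" by blast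
  have P: "pmf (poisson_limit \<theta> m) a = Cprod \<theta> a m * exp (- Lam \<theta> m)"
    by (rule pmf_limit[OF nonneg supp])
  have L2: "(\<lambda>n. Cprod \<theta> a m * (hz (zeroth \<theta> m) (n - Kf m a) / hh \<theta> n)) \<longlonglongrightarrow> pmf (poisson_limit \<theta> m) a"
    unfolding P by (intro tendsto_mult_left L)
  have ev: "eventually (\<lambda>n. Cprod \<theta> a m * (hz (zeroth \<theta> m) (n - Kf m a) / hh \<theta> n) =
      (\<Sum>\<sigma>\<in>{\<sigma>. \<sigma> permutes {1..n}}. Pn \<theta> n \<sigma> * (if cyc_vec m n \<sigma> = a then 1 else 0))) sequentially"
    using eventually_ge_at_top[of "Kf m a"]
  proof eventually_elim
    case (elim n)
    show ?case using Pn_sum_eq[of \<theta> n m a, OF hpos supp] elim by simp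
  qed
  show ?thesis by (rule Lim_transform_eventually[OF L2 ev])
qed

lemma delta_sum: "finite T \<Longrightarrow> (\<Sum>a\<in>T. g a * (if v = a then 1 else 0)) = (if v \<in> T then g v else (0::real))"
  by (simp add: if_distrib sum.delta' cong: if_cong)

lemma trunc_fin:
  fixes w :: "'i \<Rightarrow> real" and f :: "'a \<Rightarrow> real"
  assumes I: "finite I" and w: "\<And>i. i \<in> I \<Longrightarrow> w i \<ge> 0" and w1: "(\<Sum>i\<in>I. w i) = 1"
    and fb: "\<And>x. \<bar>f x\<bar> \<le> Cf" and T: "finite T"
  shows "\<bar>(\<Sum>i\<in>I. w i * f (v i)) - (\<Sum>a\<in>T. f a * (\<Sum>i\<in>I. w i * (if v i = a then 1 else 0)))\<bar>
          \<le> Cf * (1 - (\<Sum>a\<in>T. \<Sum>i\<in>I. w i * (if v i = a then 1 else 0)))"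
proof -
  have e1: "(\<Sum>a\<in>T. f a * (\<Sum>i\<in>I. w i * (if v i = a then 1 else 0))) = (\<Sum>i\<in>I. w i * (if v i \<in> T then f (v i) else 0))"
    for f :: "'a \<Rightarrow> real"
  proof -
    have "(\<Sum>a\<in>T. f a * (\<Sum>i\<in>I. w i * (if v i = a then 1 else 0))) =
          (\<Sum>i\<in>I. w i * (\<Sum>a\<in>T. f a * (if v i = a then 1 else 0)))"
      by (simp add: sum_distrib_left sum_distrib_right mult_ac sum.swap[of _ T])
    thus ?thesis by (simp add: delta_sum[OF T])
  qed
  have e2: "(\<Sum>a\<in>T. \<Sum>i\<in>I. w i * (if v i = a then 1 else 0)) = (\<Sum>i\<in>I. w i * (if v i \<in> T then 1 else 0))"
    using e1[of "\<lambda>_. 1"] by simp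
  have "\<bar>(\<Sum>i\<in>I. w i * f (v i)) - (\<Sum>i\<in>I. w i * (if v i \<in> T then f (v i) else 0))\<bar> =
        \<bar>\<Sum>i\<in>I. w i * (if v i \<in> T then 0 else f (v i))\<bar>"
    by (simp add: sum_subtractf[symmetric] right_diff_distrib[symmetric] if_distrib cong: if_cong)
  also have "\<dots> \<le> (\<Sum>i\<in>I. \<bar>w i * (if v i \<in> T then 0 else f (v i))\<bar>)" by (rule sum_abs)
  also have "\<dots> \<le> (\<Sum>i\<in>I. w i * (Cf * (1 - (if v i \<in> T then 1 else 0))))"
  proof (rule sum_mono)
    fix i assume "i \<in> I"
    thus "\<bar>w i * (if v i \<in> T then 0 else f (v i))\<bar> \<le> w i * (Cf * (1 - (if v i \<in> T then 1 else 0)))"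
      using w[of i] fb[of "v i"] by (auto simp: abs_mult intro: mult_left_mono)
  qed
  also have "\<dots> = Cf * (1 - (\<Sum>i\<in>I. w i * (if v i \<in> T then 1 else 0)))"
    using w1 by (simp add: right_diff_distrib sum_subtractf mult_ac flip: sum_distrib_left)
  finally show ?thesis unfolding e1 e2 .
qed

lemma trunc_pmf:
  fixes f :: "'a \<Rightarrow> real" and \<mu> :: "'a pmf"
  assumes fb: "\<And>x. \<bar>f x\<bar> \<le> Cf" and T: "finite T"
  shows "\<bar>measure_pmf.expectation \<mu> f - (\<Sum>a\<in>T. f a * pmf \<mu> a)\<bar> \<le> Cf * (1 - (\<Sum>a\<in>T. pmf \<mu> a))"
proof -
  have Cf0: "Cf \<ge> 0" using fb[of undefined] by linarith
  define g where "g = (\<lambda>x. f x * indicator (UNIV - T) x)"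
  have intf: "integrable (measure_pmf \<mu>) f"
    by (rule measure_pmf.integrable_const_bound[where B=Cf]) (use fb in auto)
  have intT: "integrable (measure_pmf \<mu>) (\<lambda>x. f x * indicator T x)"
    by (rule measure_pmf.integrable_const_bound[where B=Cf]) (use fb Cf0 in \<open>auto split: split_indicator\<close>)
  have intg: "integrable (measure_pmf \<mu>) g"
    unfolding g_def by (rule measure_pmf.integrable_const_bound[where B=Cf]) (use fb Cf0 in \<open>auto split: split_indicator\<close>)
  have sT: "(\<Sum>a\<in>T. f a * pmf \<mu> a) = measure_pmf.expectation \<mu> (\<lambda>x. f x * indicator T x)"
  proof -
    have "measure_pmf.expectation \<mu> (\<lambda>x. f x * indicator T x) = (\<Sum>a\<in>T. f a * indicator T a * pmf \<mu> a)"
      by (rule integral_measure_pmf_real) (use T in \<open>auto simp: indicator_def\<close>)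
    also have "\<dots> = (\<Sum>a\<in>T. f a * pmf \<mu> a)" by (rule sum.cong) auto
    finally show ?thesis by simp
  qed
  have split: "measure_pmf.expectation \<mu> f = measure_pmf.expectation \<mu> (\<lambda>x. f x * indicator T x) + measure_pmf.expectation \<mu> g"
  proof -
    have "f = (\<lambda>x. f x * indicator T x + g x)" by (auto simp: g_def fun_eq_iff split: split_indicator)
    hence "measure_pmf.expectation \<mu> f = measure_pmf.expectation \<mu> (\<lambda>x. f x * indicator T x + g x)" by simp
    also have "\<dots> = measure_pmf.expectation \<mu> (\<lambda>x. f x * indicator T x) + measure_pmf.expectation \<mu> g"
      by (rule Bochner_Integration.integral_add[OF intT intg])
    finally show ?thesis .
  qed
  have "\<bar>measure_pmf.expectation \<mu> g\<bar> \<le> measure_pmf.expectation \<mu> (\<lambda>x. norm (g x))"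
    using integral_norm_bound[of "measure_pmf \<mu>" g] by simp
  also have "\<dots> \<le> measure_pmf.expectation \<mu> (\<lambda>x. Cf * indicator (UNIV - T) x)"
  proof (rule integral_mono)
    show "integrable (measure_pmf \<mu>) (\<lambda>x. norm (g x))" using intg by simp
    show "integrable (measure_pmf \<mu>) (\<lambda>x. Cf * indicator (UNIV - T) x)"
      by (rule measure_pmf.integrable_const_bound[where B="\<bar>Cf\<bar>"]) (auto split: split_indicator)
    show "norm (g x) \<le> Cf * indicator (UNIV - T) x" for x
      using fb[of x] by (auto simp: g_def split: split_indicator)
  qed
  also have "\<dots> = Cf * measure (measure_pmf \<mu>) (UNIV - T)" by simp
  also have "measure (measure_pmf \<mu>) (UNIV - T) = 1 - measure (measure_pmf \<mu>) T"
    using measure_pmf.prob_compl[of T \<mu>] by simp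
  also have "measure (measure_pmf \<mu>) T = (\<Sum>a\<in>T. pmf \<mu> a)" by (rule measure_measure_pmf_finite[OF T])
  finally show ?thesis unfolding split sT by simp
qed

lemma tail_small:
  assumes e: "e > 0"
  shows "\<exists>T. finite T \<and> (\<forall>a\<in>T. \<forall>i. i \<notin> {1..m} \<longrightarrow> a i = 0) \<and>
           1 - (\<Sum>a\<in>T. pmf (poisson_limit \<theta> m) a) < e"
proof -
  let ?\<mu> = "poisson_limit \<theta> m"
  define TN where "TN = (\<lambda>N::nat. {a::nat\<Rightarrow>nat. \<forall>x. (x \<in> {1..m} \<longrightarrow> a x \<in> {..N}) \<and> (x \<notin> {1..m} \<longrightarrow> a x = 0)})"
  define V where "V = {a::nat\<Rightarrow>nat. \<forall>i. i \<notin> {1..m} \<longrightarrow> a i = 0}"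
  have fin: "finite (TN N)" for N unfolding TN_def by (rule finite_set_of_finite_funs) auto
  have inc: "incseq TN" unfolding TN_def by (intro monoI) auto
  have U: "(\<Union>N. TN N) = V"
  proof
    show "(\<Union>N. TN N) \<subseteq> V" unfolding TN_def V_def by auto
    show "V \<subseteq> (\<Union>N. TN N)"
    proof
      fix a assume a: "a \<in> V"
      let ?N = "Max (a ` {1..m})"
      have "a \<in> TN ?N" using a unfolding TN_def V_def by auto
      thus "a \<in> (\<Union>N. TN N)" by blast
    qed
  qed
  have "measure (measure_pmf ?\<mu>) V = 1"
  proof -
    have "\<forall>y\<in>set_pmf ?\<mu>. y \<in> V"
    proof
      fix y assume "y \<in> set_pmf ?\<mu>"
      hence "pmf ?\<mu> y \<noteq> 0" by (simp add: set_pmf_iff)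
      thus "y \<in> V" unfolding V_def poisson_limit_def by (subst (asm) pmf_Pi) (auto split: if_splits)
    qed
    thus ?thesis by (subst measure_pmf.prob_eq_1) (auto simp: AE_measure_pmf_iff)
  qed
  moreover have "(\<lambda>N. measure (measure_pmf ?\<mu>) (TN N)) \<longlonglongrightarrow> measure (measure_pmf ?\<mu>) (\<Union>N. TN N)"
    by (rule measure_pmf.finite_Lim_measure_incseq) (use inc in auto)
  ultimately have "(\<lambda>N. measure (measure_pmf ?\<mu>) (TN N)) \<longlonglongrightarrow> 1" using U by simp
  hence "eventually (\<lambda>N. dist (measure (measure_pmf ?\<mu>) (TN N)) 1 < e) sequentially"
    using e by (simp add: tendsto_iff)
  then obtain N0 where N0: "\<forall>N\<ge>N0. dist (measure (measure_pmf ?\<mu>) (TN N)) 1 < e"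
    unfolding eventually_sequentially by blast
  define N where "N = N0"
  have "dist (measure (measure_pmf ?\<mu>) (TN N)) 1 < e" using N0 by (simp add: N_def)
  hence "1 - (\<Sum>a\<in>TN N. pmf ?\<mu> a) < e"
    unfolding measure_measure_pmf_finite[OF fin] dist_real_def by linarith
  moreover have "\<forall>a\<in>TN N. \<forall>i. i \<notin> {1..m} \<longrightarrow> a i = 0" unfolding TN_def by auto
  ultimately show ?thesis using fin by blast
qed

lemma Pn_nonneg:
  assumes nonneg: "\<And>j. j \<ge> 1 \<Longrightarrow> \<theta> j \<ge> 0" and hpos: "\<And>n. hh \<theta> n > 0"
  shows "Pn \<theta> n \<sigma> \<ge> 0"
  unfolding Pn_def perm_weight_def using hpos[of n] nonneg
  by (intro divide_nonneg_pos prod_nonneg zero_le_power) auto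

lemma Pn_sum1:
  assumes hpos: "\<And>n. hh \<theta> n > 0"
  shows "(\<Sum>\<sigma>\<in>{\<sigma>. \<sigma> permutes {1..n}}. Pn \<theta> n \<sigma>) = 1"
proof -
  have "(\<Sum>\<sigma>\<in>{\<sigma>. \<sigma> permutes {1..n}}. perm_weight \<theta> n \<sigma>) = fact n * hh \<theta> n"
    using hh_hz[of \<theta> n] unfolding hz_def Z_one by simp
  thus ?thesis unfolding Pn_def using hpos[of n] by (simp add: sum_divide_distrib[symmetric])
qed

theorem corollary2p2:
  fixes \<theta> :: "nat \<Rightarrow> real"
  assumes nonneg: "\<And>j. j \<ge> 1 \<Longrightarrow> \<theta> j \<ge> 0"
    and hpos: "\<And>n. hh \<theta> n > 0"
    and ratio: "(\<lambda>n. hh \<theta> (n - 1) / hh \<theta> n) \<longlonglongrightarrow> 1"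
  shows "\<forall>m. \<forall>f :: (nat \<Rightarrow> nat) \<Rightarrow> real. bounded (range f) \<longrightarrow>
           (\<lambda>n. En \<theta> n (\<lambda>\<sigma>. f (cyc_vec m n \<sigma>)))
             \<longlonglongrightarrow> measure_pmf.expectation (poisson_limit \<theta> m) f"
proof (intro allI impI)
  fix m and f :: "(nat \<Rightarrow> nat) \<Rightarrow> real"
  assume "bounded (range f)"
  then obtain Cf where fb: "\<And>x. \<bar>f x\<bar> \<le> Cf" unfolding bounded_iff by auto
  have Cf0: "Cf \<ge> 0" using fb[of undefined] by linarith
  let ?\<mu> = "poisson_limit \<theta> m"
  let ?E = "measure_pmf.expectation ?\<mu> f"
  define pn where "pn = (\<lambda>n a. \<Sum>\<sigma>\<in>{\<sigma>. \<sigma> permutes {1..n}}. Pn \<theta> n \<sigma> * (if cyc_vec m n \<sigma> = a then 1 else 0))"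
  define p where "p = pmf ?\<mu>"
  have F1: "\<bar>En \<theta> n (\<lambda>\<sigma>. f (cyc_vec m n \<sigma>)) - (\<Sum>a\<in>T. f a * pn n a)\<bar> \<le> Cf * (1 - (\<Sum>a\<in>T. pn n a))"
    if "finite T" for n T
    unfolding En_def pn_def
    by (rule trunc_fin[OF _ _ Pn_sum1[OF hpos] fb that]) (auto intro: Pn_nonneg[OF nonneg hpos] simp: finite_permutations)
  have F2: "\<bar>?E - (\<Sum>a\<in>T. f a * p a)\<bar> \<le> Cf * (1 - (\<Sum>a\<in>T. p a))" if "finite T" for T
    unfolding p_def by (rule trunc_pmf[OF fb that])
  show "(\<lambda>n. En \<theta> n (\<lambda>\<sigma>. f (cyc_vec m n \<sigma>))) \<longlonglongrightarrow> ?E"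
    unfolding tendsto_iff
  proof (intro allI impI)
    fix e :: real assume e: "e > 0"
    define \<delta> where "\<delta> = e / (4 * (Cf + 1))"
    have \<delta>: "\<delta> > 0" using e Cf0 by (simp add: \<delta>_def)
    have Cfd: "Cf * \<delta> \<le> e / 4"
    proof -
      have "Cf * \<delta> = e / 4 * (Cf / (Cf + 1))" using Cf0 by (simp add: \<delta>_def field_simps)
      also have "\<dots> \<le> e / 4 * 1" using e Cf0 by (intro mult_left_mono) auto
      finally show ?thesis by simp
    qed
    obtain T where T: "finite T" "\<forall>a\<in>T. \<forall>i. i \<notin> {1..m} \<longrightarrow> a i = 0" "1 - (\<Sum>a\<in>T. p a) < \<delta>"
      using tail_small[OF \<delta>, of m \<theta>] unfolding p_def by blast
    have pl: "(\<lambda>n. pn n a) \<longlonglongrightarrow> p a" if "a \<in> T" for a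
      unfolding pn_def p_def by (rule pn_limit[OF nonneg hpos ratio]) (use T(2) that in auto)
    have S1: "(\<lambda>n. \<Sum>a\<in>T. f a * pn n a) \<longlonglongrightarrow> (\<Sum>a\<in>T. f a * p a)"
      by (intro tendsto_sum tendsto_mult_left pl)
    have S2: "(\<lambda>n. \<Sum>a\<in>T. pn n a) \<longlonglongrightarrow> (\<Sum>a\<in>T. p a)"
      by (intro tendsto_sum pl)
    have ev1: "eventually (\<lambda>n. dist (\<Sum>a\<in>T. f a * pn n a) (\<Sum>a\<in>T. f a * p a) < e / 4) sequentially"
    proof -
      have "e / 4 > 0" using e by simp
      thus ?thesis using S1 unfolding tendsto_iff by blast
    qed
    have ev2: "eventually (\<lambda>n. dist (\<Sum>a\<in>T. pn n a) (\<Sum>a\<in>T. p a) < \<delta>) sequentially"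
      using S2 \<delta> unfolding tendsto_iff by blast
    show "eventually (\<lambda>n. dist (En \<theta> n (\<lambda>\<sigma>. f (cyc_vec m n \<sigma>))) ?E < e) sequentially"
      using ev1 ev2
    proof eventually_elim
      case (elim n)
      let ?En = "En \<theta> n (\<lambda>\<sigma>. f (cyc_vec m n \<sigma>))"
      let ?s1n = "\<Sum>a\<in>T. f a * pn n a" and ?s1 = "\<Sum>a\<in>T. f a * p a"
      let ?s2n = "\<Sum>a\<in>T. pn n a" and ?s2 = "\<Sum>a\<in>T. p a"
      have a1: "\<bar>?En - ?s1n\<bar> \<le> Cf * (1 - ?s2n)" by (rule F1[OF T(1)])
      have a2: "\<bar>?E - ?s1\<bar> \<le> Cf * (1 - ?s2)" by (rule F2[OF T(1)])
      have a3: "\<bar>?s1n - ?s1\<bar> < e / 4" using elim(1) by (simp add: dist_real_def)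
      have a4: "1 - ?s2n \<le> 2 * \<delta>" using elim(2) T(3) by (simp add: dist_real_def)
      have a5: "1 - ?s2 \<le> \<delta>" using T(3) by simp
      have b1: "Cf * (1 - ?s2n) \<le> Cf * (2 * \<delta>)" by (rule mult_left_mono[OF a4 Cf0])
      have b2: "Cf * (1 - ?s2) \<le> Cf * \<delta>" by (rule mult_left_mono[OF a5 Cf0])
      have "\<bar>?En - ?E\<bar> < e" using a1 a2 a3 b1 b2 Cfd by linarith
      thus ?case by (simp add: dist_real_def)
    qed
  qed
qed

end
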